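(* Let $n\ge2$ and let $C$ be a curve in $\mathcal{C}\cap\mathcal{T}_n$, bounding the domain $D$. (1) If $\Pi$ is non-decreasing on $[0,\pi/n]$, then the skeleton of $C$ is $G_n(\{0\}\times[-y_0,0])$, where $-y_0=\Pi(0)=\lim_{\theta\searrow0}\Pi(\theta)$. (2) If the skeleton of $C$ is $G_n(\{0\}\times[-y,0])$ for some $y\ge0$, then $\Pi$ is non-decreasing on $[0,\pi/n]$.
   Context: Let $\mathcal{C}$ be the set of smooth closed simple strictly convex (positive curvature) curves in $\mathbb{R}^2$, each parametrized by $\theta\in\mathbb{T}=\mathbb{R}/2\pi\mathbb{Z}$ so that the unit tangent at $C(\theta)$ is $(\cos\theta,\sin\theta)$ and the outward normal is $\nu(\theta)=(\sin\theta,-\cos\theta)$. Let $\Delta$ be the vertical axis $\{0\}\times\mathbb{R}$, $\mathcal{T}_n$ the set of closed curves symmetric with respect to $\Delta$ and invariant by the rotation $R_{2\pi/n}$ of angle $2\pi/n$ about the origin, and $G_n$ the group of isometries generated by the reflection across $\Delta$ and $R_{2\pi/n}$. For $C\in\mathcal{C}\cap\mathcal{T}_n$ and $\theta\in(0,\pi/n]$, $(0,\Pi(\theta))$ is the intersection of the normal line to $C$ at $C(\theta)$ with $\Delta$; $\Pi(0)$ denotes $\lim_{\theta\searrow0}\Pi(\theta)$. The skeleton of $C$ is the cut locus of the distance to $C$ inside $\bar D$, i.e. the closure of the set of points of $D$ at which the distance function to $C$ is not differentiable. *)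

theory Defs
  imports "HOL-Analysis.Analysis"
begin

type_synonym pt = "real \<times> real"

definition smooth_curve :: "(real \<Rightarrow> pt) \<Rightarrow> bool" where
  "smooth_curve C \<longleftrightarrow> (\<exists>Dk :: nat \<Rightarrow> real \<Rightarrow> pt. Dk 0 = C \<and>
     (\<forall>k t. (Dk k has_vector_derivative Dk (Suc k) t) (at t)))"

text \<open>The class C: smooth, closed (2pi-periodic in the tangent angle), simple,
  parametrized by the tangent angle with positive curvature, i.e.
  C'(theta) = rho(theta) (cos theta, sin theta) with rho > 0.\<close>
definition curve_class :: "(real \<Rightarrow> pt) \<Rightarrow> bool" where
  "curve_class C \<longleftrightarrow> smooth_curve C \<and>
     (\<forall>t. C (t + 2 * pi) = C t) \<and>
     inj_on C {0..<2 * pi} \<and>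
     (\<exists>\<rho>. \<forall>t. \<rho> t > 0 \<and> (C has_vector_derivative (\<rho> t *\<^sub>R (cos t, sin t))) (at t))"

definition curve_image :: "(real \<Rightarrow> pt) \<Rightarrow> pt set" where
  "curve_image C = C ` {0..2 * pi}"

definition domain :: "(real \<Rightarrow> pt) \<Rightarrow> pt set" where
  "domain C = inside (curve_image C)"

definition reflD :: "pt \<Rightarrow> pt" where
  "reflD p = (- fst p, snd p)"

definition rot :: "real \<Rightarrow> pt \<Rightarrow> pt" where
  "rot a p = (cos a * fst p - sin a * snd p, sin a * fst p + cos a * snd p)"

definition sym_class :: "nat \<Rightarrow> (real \<Rightarrow> pt) \<Rightarrow> bool" where
  "sym_class n C \<longleftrightarrow> reflD ` curve_image C = curve_image C \<and>
     rot (2 * pi / real n) ` curve_image C = curve_image C"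

text \<open>The group G_n generated by the reflection across the vertical axis and
  the rotation of angle 2pi/n (both of finite order, so the generated monoid is the group).\<close>
inductive_set Gn :: "nat \<Rightarrow> (pt \<Rightarrow> pt) set" for n :: nat where
  Gn_id: "id \<in> Gn n"
| Gn_refl: "g \<in> Gn n \<Longrightarrow> reflD \<circ> g \<in> Gn n"
| Gn_rot: "g \<in> Gn n \<Longrightarrow> rot (2 * pi / real n) \<circ> g \<in> Gn n"

definition Gn_orbit :: "nat \<Rightarrow> pt set \<Rightarrow> pt set" where
  "Gn_orbit n S = (\<Union>g\<in>Gn n. g ` S)"

definition outer_normal :: "real \<Rightarrow> pt" where
  "outer_normal t = (sin t, - cos t)"

text \<open>Pi(theta): ordinate of the intersection of the normal line at C(theta) with the
  vertical axis (used for theta in (0, pi/n]).\<close>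
definition PiC :: "(real \<Rightarrow> pt) \<Rightarrow> real \<Rightarrow> real" where
  "PiC C t = (THE y. \<exists>s::real. C t + s *\<^sub>R outer_normal t = (0, y))"

definition PiC_ext :: "(real \<Rightarrow> pt) \<Rightarrow> real \<Rightarrow> real" where
  "PiC_ext C t = (if t = 0 then Lim (at_right 0) (PiC C) else PiC C t)"

definition skeleton :: "(real \<Rightarrow> pt) \<Rightarrow> pt set" where
  "skeleton C = closure {p \<in> domain C.
      \<not> ((\<lambda>q. infdist q (curve_image C)) differentiable (at p))}"

end

theory Submission
  imports Defs
begin

definition rhoC :: "(real \<Rightarrow> pt) \<Rightarrow> real \<Rightarrow> real" where
  "rhoC C = (SOME \<rho>. \<forall>t. \<rho> t > 0 \<and> (C has_vector_derivative (\<rho> t *\<^sub>R (cos t, sin t))) (at t))"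

definition hC :: "(real \<Rightarrow> pt) \<Rightarrow> real \<Rightarrow> real" where
  "hC C t = fst (C t) * sin t - snd (C t) * cos t"

definition hdC :: "(real \<Rightarrow> pt) \<Rightarrow> real \<Rightarrow> real" where
  "hdC C t = fst (C t) * cos t + snd (C t) * sin t"

definition fC :: "(real \<Rightarrow> pt) \<Rightarrow> pt \<Rightarrow> real \<Rightarrow> real" where
  "fC C p t = hC C t - (fst p * sin t - snd p * cos t)"

locale cv =
  fixes n :: nat and C :: "real \<Rightarrow> pt"
  assumes n2: "n \<ge> 2" and cc: "curve_class C" and sc: "sym_class n C"
begin

lemma rho: "rhoC C t > 0 \<and> (C has_vector_derivative (rhoC C t *\<^sub>R (cos t, sin t))) (at t)"
proof -
  have "\<exists>\<rho>. \<forall>t. \<rho> t > 0 \<and> (C has_vector_derivative (\<rho> t *\<^sub>R (cos t, sin t))) (at t)"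
    using cc unfolding curve_class_def by blast
  from someI_ex[OF this] show ?thesis unfolding rhoC_def by blast
qed

lemma rho_pos: "rhoC C t > 0" using rho by blast

lemma C_deriv: "(C has_vector_derivative (rhoC C t *\<^sub>R (cos t, sin t))) (at t)"
  using rho by blast

lemma C_cont: "isCont C t"
  using C_deriv has_vector_derivative_continuous by blast

lemma C_cont_on: "continuous_on A C"
  using C_cont continuous_at_imp_continuous_on by blast

lemma x_deriv: "((\<lambda>t. fst (C t)) has_real_derivative (rhoC C t * cos t)) (at t)"
proof -
  have "((\<lambda>t. fst (C t)) has_derivative (\<lambda>x. fst (x *\<^sub>R (rhoC C t *\<^sub>R (cos t, sin t))))) (at t)"
    using has_derivative_fst[OF C_deriv[unfolded has_vector_derivative_def]] .
  moreover have "(\<lambda>x. fst (x *\<^sub>R (rhoC C t *\<^sub>R (cos t, sin t)))) = (*) (rhoC C t * cos t)"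
    by (auto simp: fun_eq_iff)
  ultimately show ?thesis unfolding has_field_derivative_def by simp
qed

lemma y_deriv: "((\<lambda>t. snd (C t)) has_real_derivative (rhoC C t * sin t)) (at t)"
proof -
  have "((\<lambda>t. snd (C t)) has_derivative (\<lambda>x. snd (x *\<^sub>R (rhoC C t *\<^sub>R (cos t, sin t))))) (at t)"
    using has_derivative_snd[OF C_deriv[unfolded has_vector_derivative_def]] .
  moreover have "(\<lambda>x. snd (x *\<^sub>R (rhoC C t *\<^sub>R (cos t, sin t)))) = (*) (rhoC C t * sin t)"
    by (auto simp: fun_eq_iff)
  ultimately show ?thesis unfolding has_field_derivative_def by simp
qed

lemma C_per: "C (t + 2 * pi) = C t"
  using cc unfolding curve_class_def by blast

lemma C_per_nat: "C (t + 2 * pi * real k) = C t"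
proof (induction k)
  case 0 then show ?case by simp
next
  case (Suc k)
  have "C (t + 2 * pi * real (Suc k)) = C ((t + 2 * pi * real k) + 2 * pi)"
    by (simp add: algebra_simps)
  also have "\<dots> = C t" using C_per Suc by simp
  finally show ?case .
qed

lemma C_per_int: "C (t + 2 * pi * real_of_int k) = C t"
proof (cases "k \<ge> 0")
  case True
  then obtain m where "k = int m" by (metis nonneg_eq_int)
  then show ?thesis using C_per_nat by simp
next
  case False
  define m where "m = nat (- k)"
  have m: "k = - int m" using False unfolding m_def by simp
  have "C t = C ((t + 2 * pi * real_of_int k) + 2 * pi * real m)" using m by simp
  also have "\<dots> = C (t + 2 * pi * real_of_int k)" by (rule C_per_nat)
  finally show ?thesis by simp
qed

lemma support_aux:
  assumes "\<theta> - pi \<le> t" "t \<le> \<theta> + pi"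
  shows "fst (C t) * sin \<theta> - snd (C t) * cos \<theta> \<le> hC C \<theta>"
proof -
  define \<phi> where "\<phi> t = fst (C t) * sin \<theta> - snd (C t) * cos \<theta>" for t
  have d: "(\<phi> has_real_derivative rhoC C t * sin (\<theta> - t)) (at t)" for t
  proof -
    have "(\<phi> has_real_derivative rhoC C t * cos t * sin \<theta> - rhoC C t * sin t * cos \<theta>) (at t)"
      unfolding \<phi>_def by (rule DERIV_diff[OF DERIV_cmult_right[OF x_deriv] DERIV_cmult_right[OF y_deriv]])
    moreover have "rhoC C t * cos t * sin \<theta> - rhoC C t * sin t * cos \<theta> = rhoC C t * sin (\<theta> - t)"
      by (simp add: sin_diff algebra_simps)
    ultimately show ?thesis by simp
  qed
  show ?thesis
  proof (cases "t \<le> \<theta>")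
    case True
    have "\<phi> t \<le> \<phi> \<theta>"
    proof (rule DERIV_nonneg_imp_nondecreasing[OF True])
      fix x assume x: "t \<le> x" "x \<le> \<theta>"
      have "sin (\<theta> - x) \<ge> 0" using x assms by (intro sin_ge_zero) auto
      then show "\<exists>y. DERIV \<phi> x :> y \<and> y \<ge> 0" 
        by (intro exI[of _ "rhoC C x * sin (\<theta> - x)"] conjI d mult_nonneg_nonneg less_imp_le[OF rho_pos])
    qed
    then show ?thesis unfolding \<phi>_def hC_def by simp
  next
    case False
    then have le: "\<theta> \<le> t" by simp
    have "\<phi> t \<le> \<phi> \<theta>"
    proof (rule DERIV_nonpos_imp_nonincreasing[OF le])
      fix x assume x: "\<theta> \<le> x" "x \<le> t"
      have "sin (x - \<theta>) \<ge> 0" using x assms by (intro sin_ge_zero) auto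
      moreover have "sin (\<theta> - x) = - sin (x - \<theta>)" using sin_minus[of "x - \<theta>"] by simp
      ultimately have "sin (\<theta> - x) \<le> 0" by simp
      then show "\<exists>y. DERIV \<phi> x :> y \<and> y \<le> 0"
        by (intro exI[of _ "rhoC C x * sin (\<theta> - x)"] conjI d mult_nonneg_nonpos less_imp_le[OF rho_pos])
    qed
    then show ?thesis unfolding \<phi>_def hC_def by simp
  qed
qed

lemma reduce_angle:
  obtains k :: int where "\<theta> - pi \<le> t - 2 * pi * k" "t - 2 * pi * k \<le> \<theta> + pi"
proof -
  define k where "k = floor ((t - \<theta> + pi) / (2 * pi))"
  have a: "real_of_int k \<le> (t - \<theta> + pi) / (2 * pi)" unfolding k_def by linarith
  have b: "(t - \<theta> + pi) / (2 * pi) < real_of_int k + 1" unfolding k_def by linarith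
  have "2 * pi * real_of_int k \<le> t - \<theta> + pi" using a pi_gt_zero by (simp add: field_simps)
  moreover have "t - \<theta> + pi < 2 * pi * real_of_int k + 2 * pi" using b pi_gt_zero by (simp add: field_simps)
  ultimately show ?thesis using that[of k] by linarith
qed

lemma support: "fst (C t) * sin \<theta> - snd (C t) * cos \<theta> \<le> hC C \<theta>"
proof -
  obtain k :: int where k: "\<theta> - pi \<le> t - 2 * pi * k" "t - 2 * pi * k \<le> \<theta> + pi"
    by (rule reduce_angle)
  have "C t = C (t - 2 * pi * k)" using C_per_int[of "t - 2 * pi * k" k] by simp
  then show ?thesis using support_aux[OF k] by simp
qed

lemma h_deriv: "(hC C has_real_derivative hdC C t) (at t)"
proof -
  have "((\<lambda>t. fst (C t) * sin t - snd (C t) * cos t) has_real_derivative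
     (rhoC C t * cos t * sin t + fst (C t) * cos t - (rhoC C t * sin t * cos t - snd (C t) * sin t))) (at t)"
    by (rule DERIV_cong[OF DERIV_diff[OF DERIV_mult[OF x_deriv DERIV_sin] DERIV_mult[OF y_deriv DERIV_cos]]]) (simp add: algebra_simps)
  then show ?thesis unfolding hC_def[abs_def] hdC_def by (simp add: algebra_simps)
qed

lemma hd_deriv: "(hdC C has_real_derivative (rhoC C t - hC C t)) (at t)"
proof -
  have "((\<lambda>t. fst (C t) * cos t + snd (C t) * sin t) has_real_derivative
     (rhoC C t * cos t * cos t - fst (C t) * sin t + (rhoC C t * sin t * sin t + snd (C t) * cos t))) (at t)"
    by (rule DERIV_cong[OF DERIV_add[OF DERIV_mult[OF x_deriv DERIV_cos] DERIV_mult[OF y_deriv DERIV_sin]]]) (simp add: algebra_simps)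
  moreover have "rhoC C t * cos t * cos t - fst (C t) * sin t + (rhoC C t * sin t * sin t + snd (C t) * cos t)
     = rhoC C t * (cos t * cos t + sin t * sin t) - hC C t"
    unfolding hC_def by algebra
  moreover have "cos t * cos t + sin t * sin t = 1"
    by (metis sin_cos_squared_add power2_eq_square add.commute)
  ultimately show ?thesis unfolding hdC_def[abs_def] by simp
qed

lemma h_cont: "isCont (hC C) t" using h_deriv DERIV_isCont by blast
lemma hd_cont: "isCont (hdC C) t" using hd_deriv DERIV_isCont by blast

lemma h_per: "hC C (t + 2 * pi) = hC C t"
  unfolding hC_def using C_per by simp

end

definition ip :: "pt \<Rightarrow> real \<Rightarrow> real" where
  "ip q t = fst q * sin t - snd q * cos t"

definition PhiC :: "(real \<Rightarrow> pt) \<Rightarrow> pt \<Rightarrow> real" where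
  "PhiC C p = Inf (fC C p ` {0..2*pi})"

definition fdC :: "(real \<Rightarrow> pt) \<Rightarrow> pt \<Rightarrow> real \<Rightarrow> real" where
  "fdC C p t = hdC C t - (fst p * cos t + snd p * sin t)"

lemma norm_pt: "norm (p::pt) = sqrt ((fst p)^2 + (snd p)^2)"
  by (cases p) (simp add: norm_Pair)

lemma ip_bound: "\<bar>ip v t\<bar> \<le> norm v"
proof -
  have "(ip v t)^2 \<le> (fst v)^2 + (snd v)^2"
  proof -
    have "(ip v t)^2 + (fst v * cos t + snd v * sin t)^2 = ((fst v)^2 + (snd v)^2) * ((sin t)^2 + (cos t)^2)"
      unfolding ip_def by algebra
    then show ?thesis by simp (metis le_add_same_cancel1 zero_le_power2)
  qed
  then have "sqrt ((ip v t)^2) \<le> sqrt ((fst v)^2 + (snd v)^2)" by (rule real_sqrt_le_mono)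
  then show ?thesis by (simp add: norm_pt)
qed

lemma ip_diff: "ip (p - q) t = ip p t - ip q t"
  unfolding ip_def by (simp add: algebra_simps)

lemma ip_add: "ip (p + q) t = ip p t + ip q t"
  unfolding ip_def by (simp add: algebra_simps)

lemma ip_scale: "ip (a *\<^sub>R p) t = a * ip p t"
  unfolding ip_def by (simp add: algebra_simps)

lemma fC_ip: "fC C p t = hC C t - ip p t"
  unfolding fC_def ip_def by simp

lemma ip_rot: "ip (rot a q) (t + a) = ip q t"
proof -
  have "ip (rot a q) (t + a) = ip q t * ((sin a)^2 + (cos a)^2)"
    by (simp only: ip_def rot_def fst_conv snd_conv sin_add cos_add) algebra
  then show ?thesis by simp
qed

lemma rot_rot: "rot a (rot b q) = rot (a + b) q"
  unfolding rot_def by (simp add: sin_add cos_add prod_eq_iff) algebra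

lemma rot_0: "rot 0 q = q" unfolding rot_def by simp

lemma ip_refl: "ip (reflD q) t = ip q (- t)"
  unfolding ip_def reflD_def by simp

lemma reduce_2pi:
  obtains k :: int where "0 \<le> t - 2 * pi * k" "t - 2 * pi * k < 2 * pi"
proof -
  define k where "k = floor (t / (2 * pi))"
  have a: "real_of_int k \<le> t / (2 * pi)" unfolding k_def by linarith
  have b: "t / (2 * pi) < real_of_int k + 1" unfolding k_def by linarith
  have "2 * pi * real_of_int k \<le> t" using a pi_gt_zero by (simp add: field_simps)
  moreover have "t < 2 * pi * real_of_int k + 2 * pi" using b pi_gt_zero by (simp add: field_simps)
  ultimately show ?thesis using that[of k] by linarith
qed

context cv
begin

abbreviation "S \<equiv> curve_image C"

lemma C_in_S: "C t \<in> S"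
proof -
  obtain k :: int where k: "0 \<le> t - 2 * pi * k" "t - 2 * pi * k < 2 * pi" by (rule reduce_2pi)
  have "C t = C (t - 2 * pi * k)" using C_per_int[of "t - 2 * pi * k" k] by simp
  then show ?thesis unfolding curve_image_def using k by auto
qed

lemma S_support: "q \<in> S \<Longrightarrow> ip q t \<le> hC C t"
  unfolding curve_image_def ip_def using support by auto

lemma hC_ip: "hC C t = ip (C t) t"
  unfolding hC_def ip_def by simp

lemma S_refl: "q \<in> S \<Longrightarrow> reflD q \<in> S"
  using sc unfolding sym_class_def by blast

abbreviation "c \<equiv> 2 * pi / real n"

lemma c_pos: "c > 0" using n2 by simp

lemma S_rot: "q \<in> S \<Longrightarrow> rot c q \<in> S"
  using sc unfolding sym_class_def by blast

lemma S_rot_neg: "q \<in> S \<Longrightarrow> rot (- c) q \<in> S"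
proof -
  assume "q \<in> S"
  then obtain q' where "q' \<in> S" "q = rot c q'" using sc unfolding sym_class_def by blast
  then have "rot (- c) q = q'" using rot_rot[of "- c" c q'] rot_0 by simp
  then show ?thesis using \<open>q' \<in> S\<close> by simp
qed

lemma h_even: "hC C (- t) = hC C t"
proof -
  have le: "hC C (- s) \<le> hC C s" for s
  proof -
    have "hC C (- s) = ip (C (- s)) (- s)" by (rule hC_ip)
    also have "\<dots> = ip (reflD (C (- s))) s" using ip_refl[of "C (-s)" s] by simp
    also have "\<dots> \<le> hC C s" by (rule S_support[OF S_refl[OF C_in_S]])
    finally show ?thesis .
  qed
  show ?thesis using le[of t] le[of "- t"] by simp
qed

lemma h_rot1: "hC C (t + c) = hC C t"
proof -
  have "hC C (t + c) = ip (C (t + c)) (t + c)" by (rule hC_ip)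
  also have "\<dots> = ip (rot c (rot (- c) (C (t + c)))) (t + c)"
    using rot_rot[of c "- c"] rot_0 by simp
  also have "\<dots> = ip (rot (- c) (C (t + c))) t" by (rule ip_rot)
  also have "\<dots> \<le> hC C t" by (rule S_support[OF S_rot_neg[OF C_in_S]])
  finally have a: "hC C (t + c) \<le> hC C t" .
  have "hC C t = ip (C t) t" by (rule hC_ip)
  also have "\<dots> = ip (rot c (C t)) (t + c)" by (rule ip_rot[symmetric])
  also have "\<dots> \<le> hC C (t + c)" by (rule S_support[OF S_rot[OF C_in_S]])
  finally show ?thesis using a by simp
qed

lemma h_rot_nat: "hC C (t + real k * c) = hC C t"
proof (induction k)
  case 0 then show ?case by simp
next
  case (Suc k)
  have "real (Suc k) * c = c + real k * c" by (simp only: of_nat_Suc distrib_right mult_1)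
  then have e: "t + real (Suc k) * c = (t + real k * c) + c" by linarith
  have "hC C (t + real (Suc k) * c) = hC C ((t + real k * c) + c)" by (subst e) (rule refl)
  also have "\<dots> = hC C t" by (simp only: h_rot1 Suc)
  finally show ?case .
qed

lemma h_rot_int: "hC C (t + real_of_int k * c) = hC C t"
proof (cases "k \<ge> 0")
  case True
  then obtain m where "k = int m" by (metis nonneg_eq_int)
  then show ?thesis using h_rot_nat by simp
next
  case False
  define m where "m = nat (- k)"
  have m: "k = - int m" using False unfolding m_def by simp
  have "hC C t = hC C ((t + real_of_int k * c) + real m * c)" using m by simp
  also have "\<dots> = hC C (t + real_of_int k * c)" by (rule h_rot_nat)
  finally show ?thesis by simp
qed

lemma h_sym: "hC C (e * t + real_of_int k * c) = hC C t" if "e = 1 \<or> e = -1"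
  using that h_rot_int h_even by auto

lemma hd_odd: "hdC C (- t) = - hdC C t"
proof -
  have "((\<lambda>t. hC C (- t)) has_real_derivative (hdC C (- t) * (- 1))) (at t)"
    by (rule DERIV_chain2[OF h_deriv DERIV_minus[OF DERIV_ident]])
  moreover have "(\<lambda>t. hC C (- t)) = hC C" using h_even by (simp add: fun_eq_iff)
  ultimately have "(hC C has_real_derivative (- hdC C (- t))) (at t)" by simp
  then show ?thesis using DERIV_unique[OF h_deriv] by fastforce
qed

lemma hd_zero: "hdC C 0 = 0" using hd_odd[of 0] by simp

lemma hd_refl: "hdC C (c - t) = - hdC C t"
proof -
  have "hdC C (c - t) = hdC C ((- t) + 1 * c)" by simp
  have "((\<lambda>t. hC C (c - t)) has_real_derivative (hdC C (c - t) * (0 - 1))) (at t)"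
    by (rule DERIV_chain2[OF h_deriv DERIV_diff[OF DERIV_const DERIV_ident]])
  moreover have "(\<lambda>t. hC C (c - t)) = hC C"
  proof
    fix t show "hC C (c - t) = hC C t" using h_sym[of "-1" t 1] by simp
  qed
  ultimately have "(hC C has_real_derivative (- hdC C (c - t))) (at t)" by simp
  then show ?thesis using DERIV_unique[OF h_deriv] by fastforce
qed

lemma hd_half: "hdC C (pi / real n) = 0"
proof -
  have "c - pi / real n = pi / real n" by simp
  then show ?thesis using hd_refl[of "pi / real n"] by simp
qed

lemma fC_per: "fC C p (t + 2 * pi * real_of_int k) = fC C p t"
proof -
  have sc: "sin (t + 2 * pi * real_of_int k) = sin t \<and> cos (t + 2 * pi * real_of_int k) = cos t"
    by (rule sin_cos_eq_iff[THEN iffD2]) blast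
  have "hC C (t + 2 * pi * real_of_int k) = hC C t" unfolding hC_def using C_per_int sc by simp
  then show ?thesis unfolding fC_def using sc by simp
qed

lemma fC_cont: "isCont (fC C p) t"
  unfolding fC_def by (intro continuous_intros h_cont)

lemma fC_deriv: "(fC C p has_real_derivative fdC C p t) (at t)"
proof -
  have "((\<lambda>t. hC C t - (fst p * sin t - snd p * cos t)) has_real_derivative
      hdC C t - (fst p * cos t - snd p * (- sin t))) (at t)"
    by (intro DERIV_diff h_deriv DERIV_cmult DERIV_sin DERIV_cos)
  then show ?thesis unfolding fC_def[abs_def] fdC_def by simp
qed

lemma Phi_le: "PhiC C p \<le> fC C p t"
proof -
  obtain k :: int where k: "0 \<le> t - 2 * pi * k" "t - 2 * pi * k < 2 * pi" by (rule reduce_2pi)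
  have "fC C p t = fC C p (t - 2 * pi * k)" using fC_per[of p "t - 2 * pi * k" k] by simp
  moreover have "bdd_below (fC C p ` {0..2*pi})"
    using compact_imp_bounded[OF compact_continuous_image[OF continuous_at_imp_continuous_on[OF ballI[OF fC_cont]] compact_Icc]]
    by (rule bounded_imp_bdd_below)
  ultimately show ?thesis unfolding PhiC_def using k by (metis atLeastAtMost_iff cINF_lower less_eq_real_def)
qed

lemma Phi_attained: "\<exists>t\<in>{0..2*pi}. PhiC C p = fC C p t"
proof -
  have "\<exists>t\<in>{0..2*pi}. \<forall>s\<in>{0..2*pi}. fC C p t \<le> fC C p s"
    by (rule continuous_attains_inf[OF compact_Icc]) (auto intro!: continuous_at_imp_continuous_on fC_cont simp: pi_gt_zero less_imp_le)
  then obtain t where t: "t \<in> {0..2*pi}" "\<forall>s\<in>{0..2*pi}. fC C p t \<le> fC C p s" by blast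
  have "PhiC C p = fC C p t"
    using Phi_le[of p t] t unfolding PhiC_def
    by (intro antisym) (auto intro!: cINF_greatest)
  then show ?thesis using t by blast
qed

lemma argmin_stat: "fC C p t = PhiC C p \<Longrightarrow> fdC C p t = 0"
  by (rule DERIV_local_min[OF fC_deriv, of 1]) (use Phi_le in auto)

lemma fC_lip: "\<bar>fC C p t - fC C q t\<bar> \<le> dist p q"
proof -
  have "fC C p t - fC C q t = - ip (p - q) t" unfolding fC_ip ip_diff by simp
  then show ?thesis using ip_bound[of "p - q" t] by (simp add: dist_norm)
qed

lemma Phi_lip: "\<bar>PhiC C p - PhiC C q\<bar> \<le> dist p q"
proof -
  obtain tp where tp: "PhiC C p = fC C p tp" using Phi_attained by blast
  obtain tq where tq: "PhiC C q = fC C q tq" using Phi_attained by blast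
  have "PhiC C q \<le> fC C q tp" by (rule Phi_le)
  moreover have "PhiC C p \<le> fC C p tq" by (rule Phi_le)
  ultimately show ?thesis using fC_lip[of p tp q] fC_lip[of p tq q] tp tq by (simp add: abs_le_iff)
qed

lemma Phi_cont: "continuous_on A (PhiC C)"
proof (rule continuous_at_imp_continuous_on, rule ballI)
  fix x
  show "isCont (PhiC C) x"
    unfolding continuous_at_eps_delta
  proof (intro allI impI)
    fix e :: real assume "e > 0"
    have "dist (PhiC C y) (PhiC C x) < e" if "dist y x < e" for y
      using Phi_lip[of y x] that by (simp add: dist_real_def)
    then show "\<exists>d>0. \<forall>y. dist y x < d \<longrightarrow> dist (PhiC C y) (PhiC C x) < e"
      using \<open>e > 0\<close> by blast
  qed
qed

end

lemma solve2:
  fixes a b s co :: real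
  assumes "a * s - b * co = 0" "a * co + b * s = 0" "s^2 + co^2 = 1"
  shows "a = 0 \<and> b = 0"
proof -
  have "a = 0" using assms by algebra
  moreover have "b = 0" using assms by algebra
  ultimately show ?thesis by simp
qed

lemma norm_sq_rot: "(norm (v::pt))^2 = (ip v t)^2 + (fst v * cos t + snd v * sin t)^2"
proof -
  have "(ip v t)^2 + (fst v * cos t + snd v * sin t)^2 = ((fst v)^2 + (snd v)^2) * ((sin t)^2 + (cos t)^2)"
    unfolding ip_def by algebra
  then show ?thesis by (simp add: norm_pt)
qed

context cv
begin

lemma coord:
  assumes "ip q t = hC C t" "fst q * cos t + snd q * sin t = hdC C t"
  shows "q = C t"
proof -
  have "(fst (C t) - fst q) * sin t - (snd (C t) - snd q) * cos t = 0"
    "(fst (C t) - fst q) * cos t + (snd (C t) - snd q) * sin t = 0"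
    using assms unfolding ip_def hC_def hdC_def by (simp_all add: algebra_simps)
  from solve2[OF this] show ?thesis by (simp add: prod_eq_iff)
qed

lemma Phi_zero_S: "PhiC C q = 0 \<Longrightarrow> q \<in> S"
proof -
  assume z: "PhiC C q = 0"
  obtain t where t: "PhiC C q = fC C q t" using Phi_attained by blast
  have "fdC C q t = 0" using argmin_stat t by simp
  then have "q = C t" using t z by (intro coord) (auto simp: fC_ip fdC_def)
  then show ?thesis using C_in_S by simp
qed

lemma Phi_S: "q \<in> S \<Longrightarrow> PhiC C q = 0"
proof -
  assume q: "q \<in> S"
  then obtain t where "q = C t" unfolding curve_image_def by auto
  then have "fC C q t = 0" by (simp add: fC_ip hC_ip)
  then have "PhiC C q \<le> 0" using Phi_le[of q t] by simp
  moreover have "PhiC C q \<ge> 0"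
  proof -
    obtain s where "PhiC C q = fC C q s" using Phi_attained by blast
    then show ?thesis using S_support[OF q, of s] by (simp add: fC_ip)
  qed
  ultimately show ?thesis by simp
qed

lemma C_bounded: "\<exists>M. \<forall>t. norm (C t) \<le> M"
proof -
  have "compact S" unfolding curve_image_def by (rule compact_continuous_image[OF C_cont_on compact_Icc])
  then obtain M where "\<forall>q\<in>S. norm q \<le> M" using compact_imp_bounded bounded_iff by metis
  then show ?thesis using C_in_S by blast
qed

lemma dir_exists:
  assumes "p \<noteq> 0"
  obtains t where "ip p t = norm p"
proof -
  have np: "norm p > 0" using assms by simp
  have nsq: "(norm p)^2 = (fst p)^2 + (snd p)^2" by (simp add: norm_pt)
  have pos: "(fst p)^2 + (snd p)^2 > 0" using np nsq by (metis zero_less_power)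
  have "(- snd p / norm p)^2 + (fst p / norm p)^2 = ((fst p)^2 + (snd p)^2) / (norm p)^2"
    by (simp add: power_divide add_divide_distrib)
  also have "\<dots> = 1" by (simp only: nsq) (rule divide_self, use pos in linarith)
  finally have "(- snd p / norm p)^2 + (fst p / norm p)^2 = 1" .
  then obtain t where t: "- snd p / norm p = cos t" "fst p / norm p = sin t"
    using sincos_total_2pi by metis
  have "ip p t = ((fst p)^2 + (snd p)^2) / norm p"
    unfolding ip_def t[symmetric] by (simp add: power2_eq_square add_divide_distrib)
  also have "\<dots> = (norm p)^2 / norm p" using nsq by simp
  also have "\<dots> = norm p" using np by (simp add: power2_eq_square)
  finally show ?thesis using that by blast
qed

lemma pos_bounded: "bounded {p. PhiC C p > 0}"
proof -
  obtain M where M: "\<forall>t. norm (C t) \<le> M" using C_bounded by blast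
  have "norm p \<le> M" if "PhiC C p > 0" for p
  proof (cases "p = 0")
    case True then show ?thesis using M norm_ge_zero order_trans by (metis norm_zero)
  next
    case False
    then obtain t where t: "ip p t = norm p" by (rule dir_exists)
    have "0 < fC C p t" using that Phi_le[of p t] by simp
    then have "norm p < hC C t" using t by (simp add: fC_ip)
    also have "hC C t \<le> norm (C t)" using ip_bound[of "C t" t] by (simp add: hC_ip)
    finally have "norm p < norm (C t)" .
    then show ?thesis using M[rule_format, of t] by linarith
  qed
  then show ?thesis unfolding bounded_iff by blast
qed

lemma domain_char: "domain C = {p. PhiC C p > 0}"
proof
  show "{p. PhiC C p > 0} \<subseteq> domain C"
  proof
    fix p assume p: "p \<in> {p. PhiC C p > 0}"
    have pS: "p \<notin> S" using p Phi_S by fastforce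
    define K where "K = connected_component_set (- S) p"
    have oU: "open {p. PhiC C p > 0}"
      by (rule open_Collect_less[OF continuous_on_const Phi_cont])
    have oV: "open {p. PhiC C p < 0}"
      by (rule open_Collect_less[OF Phi_cont continuous_on_const])
    have KS: "K \<subseteq> - S" unfolding K_def by (rule connected_component_subset)
    have "K \<subseteq> {p. PhiC C p > 0} \<union> {p. PhiC C p < 0}"
    proof
      fix x assume "x \<in> K"
      then have "x \<notin> S" using KS by blast
      then have "PhiC C x \<noteq> 0" using Phi_zero_S by blast
      then show "x \<in> {p. PhiC C p > 0} \<union> {p. PhiC C p < 0}" by auto
    qed
    moreover have "p \<in> K" unfolding K_def using pS by simp
    moreover have "{p. 0 < PhiC C p} \<inter> K = {} \<or> {p. PhiC C p < 0} \<inter> K = {}"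
      by (rule connectedD[OF _ oU oV]) (use \<open>K \<subseteq> {p. PhiC C p > 0} \<union> {p. PhiC C p < 0}\<close> in \<open>auto simp: K_def\<close>)
    ultimately have "{p. PhiC C p < 0} \<inter> K = {}" using p by blast
    then have "K \<subseteq> {p. PhiC C p > 0}"
      using \<open>K \<subseteq> {p. PhiC C p > 0} \<union> {p. PhiC C p < 0}\<close> by blast
    then have "bounded K" using pos_bounded bounded_subset by blast
    then show "p \<in> domain C" unfolding domain_def inside_def K_def using pS by blast
  qed
next
  show "domain C \<subseteq> {p. PhiC C p > 0}"
  proof
    fix p assume p: "p \<in> domain C"
    then have pS: "p \<notin> S" and bK: "bounded (connected_component_set (- S) p)"
      unfolding domain_def inside_def by auto
    show "p \<in> {p. PhiC C p > 0}"
    proof (rule ccontr)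
      assume "p \<notin> {p. PhiC C p > 0}"
      moreover have "PhiC C p \<noteq> 0" using pS Phi_zero_S by blast
      ultimately have neg: "PhiC C p < 0" by simp
      obtain t where t: "PhiC C p = fC C p t" using Phi_attained by blast
      have gt: "ip p t > hC C t" using neg t by (simp add: fC_ip)
      define v :: pt where "v = (sin t, - cos t)"
      have ipv: "ip (p + s *\<^sub>R v) t = ip p t + s" for s
      proof -
        have "ip v t = sin t * sin t + cos t * cos t" unfolding ip_def v_def by simp
        also have "\<dots> = 1" by (metis sin_cos_squared_add power2_eq_square)
        finally show ?thesis by (simp add: ip_add ip_scale)
      qed
      define R where "R = (\<lambda>s. p + s *\<^sub>R v) ` {0..}"
      have "connected R" unfolding R_def
        by (intro connected_continuous_image connected_Ici continuous_intros)
      moreover have "p \<in> R" unfolding R_def by (auto intro!: image_eqI[of _ _ 0])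
      moreover have "R \<subseteq> - S"
      proof
        fix x assume "x \<in> R"
        then obtain s where s: "s \<ge> 0" "x = p + s *\<^sub>R v" unfolding R_def by auto
        then have "ip x t > hC C t" using gt ipv by simp
        then show "x \<in> - S" using S_support[of x t] by (auto simp: not_le)
      qed
      ultimately have "R \<subseteq> connected_component_set (- S) p"
        using connected_component_maximal by metis
      then have "bounded R" using bK bounded_subset by blast
      then obtain B where B: "\<forall>x\<in>R. norm x \<le> B" unfolding bounded_iff by blast
      define s where "s = \<bar>B\<bar> + \<bar>ip p t\<bar> + 1"
      have "p + s *\<^sub>R v \<in> R" unfolding R_def s_def by auto
      then have "norm (p + s *\<^sub>R v) \<le> B" using B by blast
      moreover have "ip (p + s *\<^sub>R v) t \<le> norm (p + s *\<^sub>R v)" using ip_bound abs_le_iff by blast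
      ultimately show False using ipv[of s] unfolding s_def by linarith
    qed
  qed
qed

lemma infdist_Phi:
  assumes "PhiC C p \<ge> 0"
  shows "infdist p S = PhiC C p"
proof (rule antisym)
  obtain t where t: "PhiC C p = fC C p t" using Phi_attained by blast
  have st: "fdC C p t = 0" using argmin_stat t by simp
  define v where "v = C t - p"
  have "ip v t = PhiC C p" unfolding v_def using t by (simp add: ip_diff fC_ip hC_ip)
  moreover have "fst v * cos t + snd v * sin t = 0"
    using st unfolding v_def fdC_def hdC_def by (simp add: algebra_simps)
  ultimately have "(norm v)^2 = (PhiC C p)^2" using norm_sq_rot[of v t] by simp
  then have "norm v = PhiC C p" using assms by (metis norm_ge_zero power2_eq_iff_nonneg)
  then have "dist p (C t) = PhiC C p" unfolding v_def by (simp add: dist_norm norm_minus_commute)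
  then show "infdist p S \<le> PhiC C p" using infdist_le[OF C_in_S, of p t] by simp
next
  have ne: "S \<noteq> {}" using C_in_S by blast
  show "PhiC C p \<le> infdist p S"
    unfolding infdist_notempty[OF ne]
  proof (rule cINF_greatest[OF ne])
    fix a assume "a \<in> S"
    then obtain t where a: "a = C t" unfolding curve_image_def by auto
    have "PhiC C p \<le> fC C p t" by (rule Phi_le)
    also have "\<dots> = ip (a - p) t" using a by (simp add: fC_ip ip_diff hC_ip)
    also have "\<dots> \<le> norm (a - p)" using ip_bound abs_le_iff by blast
    finally show "PhiC C p \<le> dist p a" by (simp add: dist_norm norm_minus_commute)
  qed
qed

end

definition dlt :: "real \<Rightarrow> real \<Rightarrow> real" where
  "dlt t s = \<bar>sin t - sin s\<bar> + \<bar>cos t - cos s\<bar>"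

definition uniqC :: "(real \<Rightarrow> pt) \<Rightarrow> pt \<Rightarrow> bool" where
  "uniqC C p \<longleftrightarrow> (\<forall>t1 t2. fC C p t1 = PhiC C p \<longrightarrow> fC C p t2 = PhiC C p \<longrightarrow>
      sin t1 = sin t2 \<and> cos t1 = cos t2)"

lemma ip_diff_bound: "\<bar>ip v t - ip v s\<bar> \<le> norm v * dlt t s"
proof -
  have "ip v t - ip v s = fst v * (sin t - sin s) - snd v * (cos t - cos s)"
    unfolding ip_def by (simp add: algebra_simps)
  also have "\<bar>\<dots>\<bar> \<le> \<bar>fst v\<bar> * \<bar>sin t - sin s\<bar> + \<bar>snd v\<bar> * \<bar>cos t - cos s\<bar>"
    by (simp add: abs_mult[symmetric] abs_triangle_ineq4)
  also have "\<dots> \<le> norm v * \<bar>sin t - sin s\<bar> + norm v * \<bar>cos t - cos s\<bar>"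
  proof -
    have "norm (fst v) \<le> norm (fst v, snd v)" "norm (snd v) \<le> norm (fst v, snd v)"
      by (rule norm_fst_le, rule norm_snd_le)
    then have "\<bar>fst v\<bar> \<le> norm v" "\<bar>snd v\<bar> \<le> norm v" by simp_all
    then show ?thesis by (intro add_mono mult_right_mono) auto
  qed
  finally show ?thesis by (simp add: dlt_def algebra_simps)
qed

lemma reduce_sc:
  obtains t' where "t' \<in> {0..2*pi}" "sin t' = sin t" "cos t' = cos t"
proof -
  obtain k :: int where k: "0 \<le> t - 2 * pi * k" "t - 2 * pi * k < 2 * pi" by (rule reduce_2pi)
  have "sin t = sin (t - 2 * pi * k) \<and> cos t = cos (t - 2 * pi * k)"
    by (rule sin_cos_eq_iff[THEN iffD2]) (intro exI[of _ k], simp)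
  then show ?thesis using that[of "t - 2 * pi * k"] k by auto
qed

context cv
begin

lemma fC_same_sc: "sin t = sin s \<Longrightarrow> cos t = cos s \<Longrightarrow> fC C p t = fC C p s"
proof -
  assume "sin t = sin s" "cos t = cos s"
  then obtain k :: int where "t = s + 2 * pi * k" using sin_cos_eq_iff by metis
  then show ?thesis using fC_per by simp
qed

lemma cont_argmin:
  assumes u: "uniqC C p" and t0: "fC C p t0 = PhiC C p" and e: "e > 0"
  shows "\<exists>d>0. \<forall>q t. dist q p < d \<longrightarrow> fC C q t = PhiC C q \<longrightarrow> dlt t t0 < e"
proof -
  define K where "K = {0..2*pi} \<inter> {t. e \<le> dlt t t0}"
  have dcont: "continuous_on UNIV (\<lambda>t. dlt t t0)" unfolding dlt_def by (intro continuous_intros)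
  have cK: "compact K" unfolding K_def
    by (intro compact_Int_closed compact_Icc closed_Collect_le continuous_on_const dcont)
  show ?thesis
  proof (cases "K = {}")
    case True
    have "dlt t t0 < e" for t
    proof -
      obtain t' where t': "t' \<in> {0..2*pi}" "sin t' = sin t" "cos t' = cos t" by (rule reduce_sc)
      then have "t' \<notin> K" using True by blast
      then have "dlt t' t0 < e" using t' unfolding K_def by auto
      then show ?thesis using t' by (simp add: dlt_def)
    qed
    then show ?thesis by (intro exI[of _ 1]) auto
  next
    case False
    obtain tK where tK: "tK \<in> K" "\<forall>s\<in>K. fC C p tK \<le> fC C p s"
      using continuous_attains_inf[OF cK False continuous_at_imp_continuous_on[OF ballI[OF fC_cont]]] by blast
    have gt: "fC C p tK > PhiC C p"
    proof (rule ccontr)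
      assume "\<not> ?thesis"
      then have "fC C p tK = PhiC C p" using Phi_le[of p tK] by simp
      then have "sin tK = sin t0 \<and> cos tK = cos t0" using u t0 unfolding uniqC_def by blast
      then have "dlt tK t0 = 0" by (simp add: dlt_def)
      then show False using tK(1) e unfolding K_def by auto
    qed
    define \<eta> where "\<eta> = fC C p tK - PhiC C p"
    have eta: "\<eta> > 0" using gt unfolding \<eta>_def by simp
    show ?thesis
    proof (intro exI[of _ "\<eta> / 2"] conjI allI impI)
      show "\<eta> / 2 > 0" using eta by simp
      fix q t assume q: "dist q p < \<eta> / 2" and t: "fC C q t = PhiC C q"
      obtain t' where t': "t' \<in> {0..2*pi}" "sin t' = sin t" "cos t' = cos t" by (rule reduce_sc)
      have ft': "fC C q t' = PhiC C q" using t fC_same_sc[OF t'(2,3)] by simp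
      have "t' \<notin> K"
      proof
        assume tK': "t' \<in> K"
        have "fC C p t' \<ge> fC C p tK" using tK tK' by blast
        moreover have "fC C q t' \<ge> fC C p t' - dist q p" using fC_lip[of q t' p] by (simp add: dist_commute)
        moreover have "PhiC C q \<le> PhiC C p + dist q p" using Phi_lip[of q p] by simp
        ultimately show False using ft' q unfolding \<eta>_def by (simp add: field_simps)
      qed
      then have "dlt t' t0 < e" using t' unfolding K_def by auto
      then show "dlt t t0 < e" using t' by (simp add: dlt_def)
    qed
  qed
qed

lemma bl_ip: "bounded_linear (\<lambda>v::pt. - ip v t)"
proof (rule bounded_linear_intro[of _ 1])
  fix x y :: pt show "- ip (x + y) t = - ip x t + - ip y t" by (simp add: ip_add)
next
  fix r and x :: pt show "- ip (r *\<^sub>R x) t = r *\<^sub>R - ip x t" by (simp add: ip_scale)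
next
  fix x :: pt show "norm (- ip x t) \<le> norm x * 1" using ip_bound[of x t] by simp
qed

lemma danskin:
  assumes u: "uniqC C p" and t0: "fC C p t0 = PhiC C p"
  shows "(PhiC C has_derivative (\<lambda>v. - ip v t0)) (at p)"
  unfolding has_derivative_at_alt
proof (intro conjI bl_ip allI impI)
  fix e :: real assume e: "e > 0"
  obtain d where d: "d > 0" "\<forall>q t. dist q p < d \<longrightarrow> fC C q t = PhiC C q \<longrightarrow> dlt t t0 < e"
    using cont_argmin[OF u t0 e] by blast
  show "\<exists>d>0. \<forall>y. norm (y - p) < d \<longrightarrow> norm (PhiC C y - PhiC C p - - ip (y - p) t0) \<le> e * norm (y - p)"
  proof (intro exI[of _ d] conjI allI impI d(1))
    fix q assume q: "norm (q - p) < d"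
    obtain tq where tq: "PhiC C q = fC C q tq" using Phi_attained by blast
    have dl: "dlt tq t0 < e" using d(2)[rule_format, of q tq] q tq by (simp add: dist_norm)
    have up: "PhiC C q \<le> PhiC C p - ip (q - p) t0"
      using Phi_le[of q t0] t0 by (simp add: fC_ip ip_diff)
    have lo: "PhiC C q \<ge> PhiC C p - ip (q - p) tq"
      using Phi_le[of p tq] tq by (simp add: fC_ip ip_diff)
    have "\<bar>ip (q - p) tq - ip (q - p) t0\<bar> \<le> norm (q - p) * dlt tq t0" by (rule ip_diff_bound)
    also have "\<dots> \<le> norm (q - p) * e" using dl by (intro mult_left_mono) auto
    finally have "\<bar>ip (q - p) tq - ip (q - p) t0\<bar> \<le> e * norm (q - p)" by (simp add: mult.commute)
    then show "norm (PhiC C q - PhiC C p - - ip (q - p) t0) \<le> e * norm (q - p)"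
      using up lo by (simp add: abs_le_iff)
  qed
qed

lemma not_diff:
  assumes t1: "fC C p t1 = PhiC C p" and t2: "fC C p t2 = PhiC C p"
    and ne: "\<not> (sin t1 = sin t2 \<and> cos t1 = cos t2)"
  shows "\<not> (PhiC C differentiable (at p))"
proof
  assume "PhiC C differentiable (at p)"
  then obtain D where D: "(PhiC C has_derivative D) (at p)" unfolding differentiable_def by blast
  have bl: "bounded_linear D" using D has_derivative_at_alt by blast
  have key: "D v \<le> - ip v ti" if ti: "fC C p ti = PhiC C p" for v ti
  proof -
    have eps: "D v \<le> - ip v ti + e * (norm v + 1)" if e: "e > 0" for e
    proof -
      obtain d where d: "d > 0" "\<forall>y. norm (y - p) < d \<longrightarrow> norm (PhiC C y - PhiC C p - D (y - p)) \<le> e * norm (y - p)"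
        using D e unfolding has_derivative_at_alt by blast
      define s where "s = d / (2 * (norm v + 1))"
      have nv: "norm v + 1 > 0" by (smt (verit) norm_ge_zero)
      have s: "s > 0" unfolding s_def using d nv by simp
      have "s * norm v < d"
      proof -
        have "s * norm v \<le> s * (norm v + 1)" using s by simp
        also have "\<dots> = d / 2" unfolding s_def using nv by (simp add: field_simps)
        finally show ?thesis using d by simp
      qed
      then have "norm ((p + s *\<^sub>R v) - p) < d" using s by simp
      then have a: "\<bar>PhiC C (p + s *\<^sub>R v) - PhiC C p - D (s *\<^sub>R v)\<bar> \<le> e * norm (s *\<^sub>R v)"
        using d(2) by fastforce
      have Ds: "D (s *\<^sub>R v) = s * D v" using linear.scaleR[OF bounded_linear.linear[OF bl]] by simp
      have b: "PhiC C (p + s *\<^sub>R v) \<le> PhiC C p - s * ip v ti"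
        using Phi_le[of "p + s *\<^sub>R v" ti] ti by (simp add: fC_ip ip_add ip_scale)
      have "s * D v \<le> s * (- ip v ti) + s * (e * norm v)"
        using a b Ds s by (simp add: abs_le_iff algebra_simps)
      then have "s * D v \<le> s * (- ip v ti + e * norm v)"
        by (simp add: algebra_simps)
      then have "D v \<le> - ip v ti + e * norm v"
        using s by (simp only: mult_le_cancel_left_pos)
      then show ?thesis using e by (simp add: algebra_simps)
    qed
    have nv: "norm v + 1 > 0" by (smt (verit) norm_ge_zero)
    show ?thesis
    proof (rule ccontr)
      assume "\<not> ?thesis"
      then have g: "D v + ip v ti > 0" by simp
      have "D v \<le> - ip v ti + ((D v + ip v ti) / (2 * (norm v + 1))) * (norm v + 1)"
        using eps[of "(D v + ip v ti) / (2 * (norm v + 1))"] g nv by simp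
      also have "\<dots> = - ip v ti + (D v + ip v ti) / 2" using nv by (simp add: field_simps)
      finally show False using g by simp
    qed
  qed
  have eq: "D v = - ip v ti" if ti: "fC C p ti = PhiC C p" for v ti
  proof -
    have "D (- v) \<le> - ip (- v) ti" using key[OF ti] .
    moreover have "D (- v) = - D v" using linear.scaleR[OF bounded_linear.linear[OF bl], of "-1" v] by simp
    moreover have "ip (- v) ti = - ip v ti" unfolding ip_def by simp
    ultimately show ?thesis using key[OF ti, of v] by simp
  qed
  have "- ip (1, 0) t1 = - ip (1, 0) t2" using eq[OF t1, of "(1,0)"] eq[OF t2, of "(1,0)"] by simp
  moreover have "- ip (0, 1) t1 = - ip (0, 1) t2" using eq[OF t1, of "(0,1)"] eq[OF t2, of "(0,1)"] by simp
  ultimately show False using ne unfolding ip_def by simp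
qed

lemma open_domain: "open (domain C)"
  unfolding domain_char by (rule open_Collect_less[OF continuous_on_const Phi_cont])

lemma diff_iff:
  assumes p: "p \<in> domain C"
  shows "((\<lambda>q. infdist q S) differentiable (at p)) \<longleftrightarrow> uniqC C p"
proof -
  have eqf: "\<And>x. x \<in> domain C \<Longrightarrow> PhiC C x = infdist x S"
    using infdist_Phi domain_char by (simp add: less_imp_le)
  have "((\<lambda>q. infdist q S) differentiable (at p)) \<longleftrightarrow> (PhiC C differentiable (at p))"
  proof
    assume "(\<lambda>q. infdist q S) differentiable (at p)"
    then obtain D where "((\<lambda>q. infdist q S) has_derivative D) (at p)" unfolding differentiable_def by blast
    then have "(PhiC C has_derivative D) (at p)"
      by (rule has_derivative_transform_within_open[OF _ open_domain p]) (simp add: eqf)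
    then show "PhiC C differentiable (at p)" unfolding differentiable_def by blast
  next
    assume "PhiC C differentiable (at p)"
    then obtain D where "(PhiC C has_derivative D) (at p)" unfolding differentiable_def by blast
    then have "((\<lambda>q. infdist q S) has_derivative D) (at p)"
      by (rule has_derivative_transform_within_open[OF _ open_domain p]) (simp add: eqf)
    then show "(\<lambda>q. infdist q S) differentiable (at p)" unfolding differentiable_def by blast
  qed
  also have "\<dots> \<longleftrightarrow> uniqC C p"
  proof
    assume d: "PhiC C differentiable (at p)"
    show "uniqC C p" unfolding uniqC_def using not_diff d by blast
  next
    assume u: "uniqC C p"
    obtain t0 where "PhiC C p = fC C p t0" using Phi_attained by blast
    then show "PhiC C differentiable (at p)"
      using danskin[OF u] unfolding differentiable_def by metis
  qed
  finally show ?thesis .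
qed

end

definition cn :: "nat \<Rightarrow> real" where "cn n = 2 * pi / real n"

definition Fp :: "(real \<Rightarrow> pt) \<Rightarrow> real \<Rightarrow> real \<Rightarrow> real \<Rightarrow> real" where
  "Fp C r a t = hC C t - r * cos (t - a)"

definition Gp :: "(real \<Rightarrow> pt) \<Rightarrow> real \<Rightarrow> real \<Rightarrow> real \<Rightarrow> real" where
  "Gp C r a t = hdC C t + r * sin (t - a)"

lemma fold_abs:
  fixes a b c :: real and M :: int
  assumes c: "c > 0" and a: "0 \<le> a" "a \<le> c / 2" and b: "0 \<le> b" "b \<le> c / 2" and e: "e = 1 \<or> e = -1"
  shows "\<bar>b - a\<bar> \<le> \<bar>e * b - a + M * c\<bar>"
proof -
  have m1: "real_of_int M * c \<ge> c" if "M \<ge> 1"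
  proof -
    have "real_of_int M \<ge> 1" using that by simp
    then show ?thesis using mult_right_mono[of 1 "real_of_int M" c] c by simp
  qed
  have m2: "real_of_int M * c \<ge> 2 * c" if "M \<ge> 2"
  proof -
    have "real_of_int M \<ge> 2" using that by simp
    then show ?thesis using c by (simp add: mult_right_mono)
  qed
  have m3: "real_of_int M * c \<le> - c" if "M \<le> -1"
  proof -
    have "real_of_int M \<le> -1" using that by simp
    then have "real_of_int M * c \<le> -1 * c" using c by (intro mult_right_mono) auto
    then show ?thesis by simp
  qed
  define X where "X = real_of_int M * c"
  have "\<bar>b - a\<bar> \<le> \<bar>e * b - a + X\<bar>"
  proof -
    consider "M = 0" | "M = 1" | "M \<ge> 2" | "M \<le> -1" by linarith
    then show ?thesis
    proof cases
      case 1 then have "X = 0" unfolding X_def by simp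
      then show ?thesis using e a b by auto
    next
      case 2 then have "X = c" unfolding X_def by simp
      then show ?thesis using e a b c by (auto simp: abs_if)
    next
      case 3 then have "X \<ge> 2 * c" unfolding X_def using m2 by simp
      then show ?thesis using e a b c by (auto simp: abs_if)
    next
      case 4 then have "X \<le> - c" unfolding X_def using m3 by simp
      then show ?thesis using e a b c by (auto simp: abs_if)
    qed
  qed
  then show ?thesis unfolding X_def .
qed

lemma cos_eq_cases:
  assumes "cos x = cos y"
  shows "(sin x = sin y \<and> cos x = cos y) \<or> (\<exists>k::int. x = - y + 2 * pi * k)"
proof -
  have "(sin x)^2 = (sin y)^2" using assms sin_squared_eq[of x] sin_squared_eq[of y] by simp
  then have "sin x = sin y \<or> sin x = - sin y" by (simp add: power2_eq_iff)
  then show ?thesis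
  proof
    assume "sin x = sin y" then show ?thesis using assms by simp
  next
    assume "sin x = - sin y"
    then have "sin x = sin (- y) \<and> cos x = cos (- y)" using assms by simp
    then show ?thesis using sin_cos_eq_iff by blast
  qed
qed

context cv
begin

lemma cn_pos: "cn n > 0" unfolding cn_def using n2 by simp
lemma cn_half: "cn n / 2 = pi / real n" unfolding cn_def by simp
lemma half_le: "pi / real n \<le> pi / 2"
  using n2 by (intro divide_left_mono) auto
lemma half_pos: "pi / real n > 0" using n2 by simp
lemma two_pi_cn: "2 * pi = real n * cn n" unfolding cn_def using n2 by simp

lemma h_sym': "e = 1 \<or> e = -1 \<Longrightarrow> hC C (e * t + real_of_int k * cn n) = hC C t"
  unfolding cn_def by (rule h_sym)

lemma fC_polar: "fC C (r *\<^sub>R outer_normal a) t = Fp C r a t"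
  unfolding fC_def Fp_def outer_normal_def by (simp add: cos_diff algebra_simps)

lemma Fp_deriv: "(Fp C r a has_real_derivative Gp C r a t) (at t)"
proof -
  have "((\<lambda>t. hC C t - r * cos (t - a)) has_real_derivative hdC C t - r * (- sin (t - a) * (1 - 0))) (at t)"
    by (intro DERIV_diff h_deriv DERIV_cmult DERIV_chain2[OF DERIV_cos] DERIV_diff DERIV_ident DERIV_const)
  then show ?thesis unfolding Fp_def[abs_def] Gp_def by simp
qed

lemma Fp_cont: "isCont (Fp C r a) t" using Fp_deriv DERIV_isCont by blast

lemma Fp_per: "Fp C r a (t + 2 * pi * real_of_int k) = Fp C r a t"
proof -
  have "Fp C r a (t + 2 * pi * real_of_int k) = fC C (r *\<^sub>R outer_normal a) (t + 2 * pi * real_of_int k)"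
    by (simp add: fC_polar)
  also have "\<dots> = fC C (r *\<^sub>R outer_normal a) t" by (rule fC_per)
  finally show ?thesis by (simp add: fC_polar)
qed

lemma Fp_sym:
  assumes "e = 1 \<or> e = -1"
  shows "Fp C r (e * a + real_of_int k * cn n) (e * t + real_of_int k * cn n) = Fp C r a t"
proof -
  have ca: "cos (a - t) = cos (t - a)" by (metis cos_minus minus_diff_eq)
  have "cos (e * t + real_of_int k * cn n - (e * a + real_of_int k * cn n)) = cos (t - a)"
    using assms ca by (auto simp: algebra_simps)
  then show ?thesis unfolding Fp_def using h_sym'[OF assms] by simp
qed

lemma decomp:
  obtains e a0 k where "e = 1 \<or> e = -1" "0 \<le> a0" "a0 \<le> pi / real n" "x = e * a0 + real_of_int k * cn n"
proof -
  define k where "k = floor (x / cn n + 1 / 2)"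
  have k1: "real_of_int k \<le> x / cn n + 1 / 2" unfolding k_def by linarith
  have k2: "x / cn n + 1 / 2 < real_of_int k + 1" unfolding k_def by linarith
  define b where "b = x - real_of_int k * cn n"
  have "real_of_int k * cn n \<le> x + cn n / 2" using k1 cn_pos by (simp add: field_simps)
  then have b1: "- (pi / real n) \<le> b" unfolding b_def using cn_half by linarith
  have "x + cn n / 2 < real_of_int k * cn n + cn n" using k2 cn_pos by (simp add: field_simps)
  then have b2: "b < pi / real n" unfolding b_def using cn_half by linarith
  show ?thesis
  proof (cases "b \<ge> 0")
    case True
    then show ?thesis using that[of 1 b k] b2 unfolding b_def by simp
  next
    case False
    then show ?thesis using that[of "-1" "- b" k] b1 unfolding b_def by simp
  qed
qed

lemma fold_cos:
  assumes a: "0 \<le> a" "a \<le> pi / real n" and t: "0 \<le> t'" "t' \<le> pi / real n" and e: "e = 1 \<or> e = -1"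
  shows "cos (e * t' + real_of_int m * cn n - a) \<le> cos (t' - a)"
proof -
  define u where "u = e * t' + real_of_int m * cn n - a"
  obtain j :: int where j: "0 - pi \<le> u - 2 * pi * j" "u - 2 * pi * j \<le> 0 + pi" by (rule reduce_angle)
  define w where "w = u - 2 * pi * j"
  have cu: "cos u = cos w"
  proof -
    have "sin u = sin (w + 2 * pi * j) \<and> cos u = cos (w + 2 * pi * j)" unfolding w_def by simp
    moreover have "sin (w + 2 * pi * j) = sin w \<and> cos (w + 2 * pi * j) = cos w"
      by (rule sin_cos_eq_iff[THEN iffD2]) blast
    ultimately show ?thesis by simp
  qed
  have "w = e * t' - a + real_of_int (m - int n * j) * cn n"
    unfolding w_def u_def using two_pi_cn by (simp add: algebra_simps)
  then have wa: "\<bar>t' - a\<bar> \<le> \<bar>w\<bar>"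
    using fold_abs[OF cn_pos, of a t' e "m - int n * j"] a t e cn_half by simp
  have wpi: "\<bar>w\<bar> \<le> pi" using j unfolding w_def by simp
  have "cos \<bar>w\<bar> \<le> cos \<bar>t' - a\<bar>"
    using wa wpi by (intro cos_monotone_0_pi_le) auto
  then show ?thesis using cu unfolding u_def by simp
qed

lemma fold_F:
  assumes r: "r \<ge> 0" and a: "0 \<le> a" "a \<le> pi / real n"
  obtains t' e k where "0 \<le> t'" "t' \<le> pi / real n" "e = 1 \<or> e = -1" "\<phi> = e * t' + real_of_int k * cn n"
    "Fp C r a t' \<le> Fp C r a \<phi>"
proof -
  obtain e t' k where d: "e = 1 \<or> e = -1" "0 \<le> t'" "t' \<le> pi / real n" "\<phi> = e * t' + real_of_int k * cn n"
    by (rule decomp)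
  have "hC C \<phi> = hC C t'" using d h_sym' by simp
  moreover have "cos (\<phi> - a) \<le> cos (t' - a)" using fold_cos[OF a d(2,3) d(1)] d(4) by simp
  ultimately have "Fp C r a t' \<le> Fp C r a \<phi>" unfolding Fp_def using r by (simp add: mult_left_mono)
  then show ?thesis using that d by blast
qed

lemma chamber_min:
  assumes r: "r \<ge> 0" and a: "0 \<le> a" "a \<le> pi / real n"
  shows "\<exists>t\<in>{0..pi / real n}. \<forall>\<phi>. Fp C r a t \<le> Fp C r a \<phi>"
proof -
  have "\<exists>t\<in>{0..pi / real n}. \<forall>s\<in>{0..pi / real n}. Fp C r a t \<le> Fp C r a s"
    by (rule continuous_attains_inf[OF compact_Icc])
       (auto intro!: continuous_at_imp_continuous_on Fp_cont simp: less_imp_le[OF half_pos])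
  then obtain t where t: "t \<in> {0..pi / real n}" "\<forall>s\<in>{0..pi / real n}. Fp C r a t \<le> Fp C r a s" by blast
  have "Fp C r a t \<le> Fp C r a \<phi>" for \<phi>
  proof -
    obtain t' e k where t': "0 \<le> t'" "t' \<le> pi / real n" "Fp C r a t' \<le> Fp C r a \<phi>"
      using fold_F[OF r a] by metis
    have "Fp C r a t \<le> Fp C r a t'" using t(2) t'(1,2) by simp
    then show ?thesis using t'(3) by linarith
  qed
  then show ?thesis using t by blast
qed

end

definition PiH :: "(real \<Rightarrow> pt) \<Rightarrow> real \<Rightarrow> real" where
  "PiH C t = hdC C t / sin t"

context cv
begin

lemma half_lt: "pi / real n < pi"
proof -
  have "pi / real n \<le> pi / 2" by (rule half_le)
  then show ?thesis using pi_gt_zero by linarith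
qed

lemma PiC_eq:
  assumes "0 < t" "t < pi"
  shows "PiC C t = PiH C t"
proof -
  have s: "sin t > 0" using assms sin_gt_zero by blast
  define x where "x = fst (C t)"
  define y where "y = snd (C t)"
  have P: "C t + (- x / sin t) *\<^sub>R outer_normal t = (0, PiH C t)"
  proof -
    have "fst (C t + (- x / sin t) *\<^sub>R outer_normal t) = 0"
      unfolding outer_normal_def x_def using s by simp
    moreover have "snd (C t + (- x / sin t) *\<^sub>R outer_normal t) = PiH C t"
      unfolding outer_normal_def x_def PiH_def hdC_def using s by (simp add: field_simps)
    ultimately show ?thesis by (simp add: prod_eq_iff)
  qed
  have U: "yy = PiH C t" if "C t + s' *\<^sub>R outer_normal t = (0, yy)" for s' yy
  proof -
    have e1: "x + s' * sin t = 0" and e2: "y - s' * cos t = yy"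
      using that unfolding outer_normal_def x_def y_def by (auto simp: prod_eq_iff)
    have xs: "x = - s' * sin t" using e1 by simp
    have "PiH C t = (x * cos t + y * sin t) / sin t" unfolding PiH_def hdC_def x_def y_def by simp
    also have "\<dots> = y - s' * cos t" using s unfolding xs by (simp add: field_simps)
    also have "\<dots> = yy" using e2 by simp
    finally show ?thesis by simp
  qed
  show ?thesis unfolding PiC_def
    by (rule the_equality) (use P U in blast)+
qed

lemma PiH_lim: "(PiH C \<longlongrightarrow> rhoC C 0 - hC C 0) (at 0)"
proof -
  have a: "((\<lambda>t. (hdC C t - hdC C 0) / (t - 0)) \<longlongrightarrow> rhoC C 0 - hC C 0) (at 0)"
    using hd_deriv[of 0] unfolding has_field_derivative_iff by simp
  have b: "((\<lambda>t::real. (sin t - sin 0) / (t - 0)) \<longlongrightarrow> cos 0) (at 0)"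
    using DERIV_sin[of "0::real"] unfolding has_field_derivative_iff by simp
  have "((\<lambda>t. ((hdC C t - hdC C 0) / (t - 0)) / ((sin t - sin 0) / (t - 0))) \<longlongrightarrow> (rhoC C 0 - hC C 0) / cos 0) (at 0)"
    by (rule tendsto_divide[OF a b]) simp
  moreover have "\<forall>\<^sub>F t in at 0. ((hdC C t - hdC C 0) / (t - 0)) / ((sin t - sin 0) / (t - 0)) = PiH C t"
    unfolding eventually_at_filter by (auto simp: hd_zero PiH_def)
  ultimately show ?thesis by (simp add: tendsto_cong)
qed

lemma Pi_lim: "(PiC C \<longlongrightarrow> rhoC C 0 - hC C 0) (at_right 0)"
proof -
  have "(PiH C \<longlongrightarrow> rhoC C 0 - hC C 0) (at_right 0)"
    using PiH_lim by (rule tendsto_mono[OF at_le, rotated]) simp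
  moreover have "\<forall>\<^sub>F t in at_right 0. PiH C t = PiC C t"
    unfolding eventually_at_right_field
    by (intro exI[of _ pi]) (auto simp: PiC_eq)
  ultimately show ?thesis by (simp add: tendsto_cong)
qed

lemma PiExt0: "PiC_ext C 0 = rhoC C 0 - hC C 0"
  unfolding PiC_ext_def using tendsto_Lim[OF trivial_limit_at_right_real Pi_lim] by simp

lemma PiExt_pos: "0 < t \<Longrightarrow> t < pi \<Longrightarrow> PiC_ext C t = PiH C t"
  unfolding PiC_ext_def using PiC_eq by simp

lemma L0_gt: "rhoC C 0 - hC C 0 > - hC C 0" using rho_pos[of 0] by simp

lemma Gp_PiH: "sin t \<noteq> 0 \<Longrightarrow> Gp C r a t = sin t * (PiH C t + r * cos a) - r * sin a * cos t"
  unfolding Gp_def PiH_def by (simp add: sin_diff algebra_simps)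

lemma PiH_cont: "sin t \<noteq> 0 \<Longrightarrow> isCont (PiH C) t"
  unfolding PiH_def[abs_def] by (intro continuous_intros hd_cont) auto

lemma min_stat: "\<forall>\<phi>. Fp C r a t \<le> Fp C r a \<phi> \<Longrightarrow> Gp C r a t = 0"
  by (rule DERIV_local_min[OF Fp_deriv, of 1]) auto

lemma sin_pos_half: "0 < s \<Longrightarrow> s \<le> pi / real n \<Longrightarrow> sin s > 0"
  using half_lt by (intro sin_gt_zero) auto

lemma cot_strict:
  assumes "0 < s" "s < s'" "s' < pi"
  shows "cos s' / sin s' < cos s / sin s"
proof -
  have ss: "sin s > 0" "sin s' > 0" using assms by (auto intro!: sin_gt_zero)
  have "sin (s' - s) > 0" using assms by (intro sin_gt_zero) auto
  then have "cos s * sin s' - cos s' * sin s > 0" by (simp add: sin_diff algebra_simps)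
  then show ?thesis using ss by (simp add: field_simps)
qed

lemma zeros_unique:
  assumes mono: "mono_on {0..pi / real n} (PiC_ext C)" and r: "r > 0"
    and a: "0 < a" "a \<le> pi / real n"
    and s: "0 < s" "s \<le> pi / real n" and s': "0 < s'" "s' \<le> pi / real n"
    and z: "Gp C r a s = 0" "Gp C r a s' = 0"
  shows "s = s'"
proof (rule ccontr)
  assume ne: "s \<noteq> s'"
  have key: False if lt: "u < u'" and u: "0 < u" "u' \<le> pi / real n"
    and zu: "Gp C r a u = 0" "Gp C r a u' = 0" for u u'
  proof -
    have su: "sin u > 0" "sin u' > 0" using sin_pos_half u lt by auto
    have sa: "sin a > 0" using sin_pos_half a by auto
    have pm: "PiH C u \<le> PiH C u'"
    proof -
      have "PiC_ext C u \<le> PiC_ext C u'"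
        using mono u lt by (intro mono_onD[OF mono]) auto
      moreover have "u < pi" "u' < pi" using u lt half_lt by auto
      ultimately show ?thesis using PiExt_pos u lt by auto
    qed
    have "cos u' / sin u' < cos u / sin u" using cot_strict[of u u'] u lt half_lt by auto
    then have c: "r * sin a * (cos u' / sin u') < r * sin a * (cos u / sin u)"
      by (intro mult_strict_left_mono) (use r sa in auto)
    have q: "PiH C v + r * cos a - r * sin a * (cos v / sin v) = 0" if "sin v > 0" "Gp C r a v = 0" for v
    proof -
      have "sin v * (PiH C v + r * cos a) - r * sin a * cos v = 0" using Gp_PiH that by simp
      then have "sin v * (PiH C v + r * cos a - r * sin a * (cos v / sin v)) = 0"
        using that by (simp add: field_simps)
      then show ?thesis using that by simp
    qed
    show False using q[OF su(1) zu(1)] q[OF su(2) zu(2)] pm c by linarith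
  qed
  show False
  proof (cases "s < s'")
    case True then show ?thesis using key[of s s'] s s' z by auto
  next
    case False then have "s' < s" using ne by simp
    then show ?thesis using key[of s' s] s s' z by auto
  qed
qed

lemma G0_neg: "0 < a \<Longrightarrow> a \<le> pi / real n \<Longrightarrow> r > 0 \<Longrightarrow> Gp C r a 0 < 0"
  unfolding Gp_def using hd_zero sin_pos_half[of a] by simp

lemma Ga0_pos:
  assumes mono: "mono_on {0..pi / real n} (PiC_ext C)" and r: "r > - (rhoC C 0 - hC C 0)"
    and s: "0 < s" "s \<le> pi / real n"
  shows "Gp C r 0 s > 0"
proof -
  have "PiC_ext C 0 \<le> PiC_ext C s" using mono s half_pos by (intro mono_onD[OF mono]) auto
  then have "PiH C s \<ge> rhoC C 0 - hC C 0" using PiExt0 PiExt_pos[of s] s half_lt by auto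
  then have "PiH C s + r > 0" using r by simp
  moreover have "sin s > 0" using sin_pos_half s by auto
  ultimately show ?thesis using Gp_PiH[of s r 0] by simp
qed

lemma chamber_unique:
  assumes mono: "mono_on {0..pi / real n} (PiC_ext C)" and r: "r > 0"
    and a: "0 \<le> a" "a \<le> pi / real n" and na: "\<not> (a = 0 \<and> r \<le> - (rhoC C 0 - hC C 0))"
    and t: "0 \<le> t" "t \<le> pi / real n" "\<forall>\<phi>. Fp C r a t \<le> Fp C r a \<phi>"
    and t': "0 \<le> t'" "t' \<le> pi / real n" "\<forall>\<phi>. Fp C r a t' \<le> Fp C r a \<phi>"
  shows "t = t'"
proof (cases "a = 0")
  case True
  then have rr: "r > - (rhoC C 0 - hC C 0)" using na by simp
  have "u = 0" if "0 \<le> u" "u \<le> pi / real n" "\<forall>\<phi>. Fp C r a u \<le> Fp C r a \<phi>" for u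
  proof (rule ccontr)
    assume "u \<noteq> 0"
    then have "Gp C r 0 u > 0" using Ga0_pos[OF mono rr] that by simp
    then show False using min_stat[OF that(3)] True by simp
  qed
  then show ?thesis using t t' by metis
next
  case False
  then have a0: "0 < a" using a by simp
  have pos: "0 < u" if "0 \<le> u" "\<forall>\<phi>. Fp C r a u \<le> Fp C r a \<phi>" for u
  proof (rule ccontr)
    assume "\<not> 0 < u"
    then have "u = 0" using that by simp
    then show False using min_stat[OF that(2)] G0_neg[OF a0 a(2) r] by simp
  qed
  show ?thesis
    by (rule zeros_unique[OF mono r a0 a(2) pos[OF t(1,3)] t(2) pos[OF t'(1,3)] t'(2)
          min_stat[OF t(3)] min_stat[OF t'(3)]])
qed

end

context cv
begin

lemma minimizer_sc:
  assumes r: "r > 0" and a: "0 \<le> a" "a \<le> pi / real n"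
    and ts: "0 \<le> ts" "ts \<le> pi / real n" "\<forall>\<phi>. Fp C r a ts \<le> Fp C r a \<phi>"
    and cu: "\<And>u. 0 \<le> u \<Longrightarrow> u \<le> pi / real n \<Longrightarrow> \<forall>\<phi>. Fp C r a u \<le> Fp C r a \<phi> \<Longrightarrow> u = ts"
    and ph: "\<forall>\<psi>. Fp C r a \<phi> \<le> Fp C r a \<psi>"
    and psi_case: "\<And>\<psi>. \<psi> = 2 * a - ts \<Longrightarrow> \<forall>ww. Fp C r a \<psi> \<le> Fp C r a ww \<Longrightarrow> \<psi> = ts"
  shows "sin \<phi> = sin ts \<and> cos \<phi> = cos ts"
proof -
  obtain t' e k where d: "0 \<le> t'" "t' \<le> pi / real n" "e = 1 \<or> e = -1" "\<phi> = e * t' + real_of_int k * cn n"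
    "Fp C r a t' \<le> Fp C r a \<phi>"
    using fold_F[OF less_imp_le[OF r] a] by metis
  have t'min: "\<forall>\<psi>. Fp C r a t' \<le> Fp C r a \<psi>" using d(5) ph by (meson order_trans)
  then have t'ts: "t' = ts" using cu d(1,2) by blast
  have eqF: "Fp C r a \<phi> = Fp C r a t'" using d(5) ph[rule_format, of t'] by simp
  have "hC C \<phi> = hC C t'" using d(3,4) h_sym' by simp
  then have "r * cos (\<phi> - a) = r * cos (ts - a)" using eqF t'ts unfolding Fp_def by simp
  then have ce: "cos (\<phi> - a) = cos (ts - a)" using r by simp
  from cos_eq_cases[OF ce] show ?thesis
  proof
    assume "sin (\<phi> - a) = sin (ts - a) \<and> cos (\<phi> - a) = cos (ts - a)"
    then obtain j :: int where "\<phi> - a = ts - a + 2 * pi * j" using sin_cos_eq_iff by metis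
    then have "\<phi> = ts + 2 * pi * j" by simp
    then show ?thesis by (metis sin_cos_eq_iff)
  next
    assume "\<exists>k::int. \<phi> - a = - (ts - a) + 2 * pi * k"
    then obtain j :: int where j: "\<phi> = (2 * a - ts) + 2 * pi * j" by (auto simp: algebra_simps)
    have "Fp C r a (2 * a - ts) = Fp C r a \<phi>" using Fp_per[of r a "2 * a - ts" j] j by simp
    then have "\<forall>ww. Fp C r a (2 * a - ts) \<le> Fp C r a ww" using ph by simp
    then have "2 * a - ts = ts" using psi_case by blast
    then have "\<phi> = ts + 2 * pi * j" using j by simp
    then show ?thesis by (metis sin_cos_eq_iff)
  qed
qed

lemma uniq_global:
  assumes mono: "mono_on {0..pi / real n} (PiC_ext C)" and r: "r > 0"
    and a: "0 \<le> a" "a \<le> pi / real n" and na: "\<not> (a = 0 \<and> r \<le> - (rhoC C 0 - hC C 0))"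
    and m1: "\<forall>\<phi>. Fp C r a t1 \<le> Fp C r a \<phi>" and m2: "\<forall>\<phi>. Fp C r a t2 \<le> Fp C r a \<phi>"
  shows "sin t1 = sin t2 \<and> cos t1 = cos t2"
proof -
  obtain ts where ts: "ts \<in> {0..pi / real n}" "\<forall>\<phi>. Fp C r a ts \<le> Fp C r a \<phi>"
    using chamber_min[OF less_imp_le[OF r] a] by blast
  have cu: "u = ts" if "0 \<le> u" "u \<le> pi / real n" "\<forall>\<phi>. Fp C r a u \<le> Fp C r a \<phi>" for u
    using chamber_unique[OF mono r a na that] ts by auto
  have c2: "cn n = 2 * (pi / real n)" using cn_half by simp
  have psi_case: "\<psi> = ts" if psi: "\<psi> = 2 * a - ts" and pm: "\<forall>ww. Fp C r a \<psi> \<le> Fp C r a ww" for \<psi>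
  proof -
    consider "0 \<le> \<psi> \<and> \<psi> \<le> pi / real n" | "\<psi> < 0" | "\<psi> > pi / real n" by linarith
    then show ?thesis
    proof cases
      case 1 then show ?thesis using cu pm by blast
    next
      case 2
      define t'' where "t'' = - \<psi>"
      have t'': "0 \<le> t''" "t'' \<le> pi / real n" using 2 psi ts a unfolding t''_def by auto
      have "cos ((-1) * t'' + real_of_int 0 * cn n - a) \<le> cos (t'' - a)"
        by (rule fold_cos[OF a t'']) simp
      moreover have "hC C ((-1) * t'' + real_of_int 0 * cn n) = hC C t''" by (rule h_sym') simp
      ultimately have "Fp C r a t'' \<le> Fp C r a \<psi>" unfolding Fp_def t''_def using r
        by (simp add: mult_left_mono)
      then have "\<forall>ww. Fp C r a t'' \<le> Fp C r a ww" using pm by (meson order_trans)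
      then have "t'' = ts" using cu t'' by blast
      then have a0: "a = 0" using psi unfolding t''_def by simp
      then have rr: "r > - (rhoC C 0 - hC C 0)" using na by simp
      have "ts > 0" using `t'' = ts` 2 unfolding t''_def by simp
      then have "Gp C r 0 ts > 0" using Ga0_pos[OF mono rr] ts by simp
      then show ?thesis using min_stat[OF ts(2)] a0 by simp
    next
      case 3
      define t'' where "t'' = cn n - \<psi>"
      have t'': "0 \<le> t''" "t'' \<le> pi / real n" using 3 psi ts a c2 unfolding t''_def by auto
      have "cos ((-1) * t'' + real_of_int 1 * cn n - a) \<le> cos (t'' - a)"
        by (rule fold_cos[OF a t'']) simp
      moreover have "hC C ((-1) * t'' + real_of_int 1 * cn n) = hC C t''" by (rule h_sym') simp
      ultimately have "Fp C r a t'' \<le> Fp C r a \<psi>" unfolding Fp_def t''_def using r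
        by (simp add: mult_left_mono)
      then have "\<forall>ww. Fp C r a t'' \<le> Fp C r a ww" using pm by (meson order_trans)
      then have "t'' = ts" using cu t'' by blast
      then have ah: "a = pi / real n" using psi c2 unfolding t''_def by simp
      then have a0: "0 < a" using half_pos by simp
      have "ts > 0"
      proof (rule ccontr)
        assume "\<not> ts > 0" then have "ts = 0" using ts by simp
        then show False using min_stat[OF ts(2)] G0_neg[OF a0 a(2) r] by simp
      qed
      have "Gp C r a (pi / real n) = 0" unfolding Gp_def using ah hd_half by simp
      then have "ts = pi / real n"
        using zeros_unique[OF mono r a0 a(2) `ts > 0` _ half_pos order_refl min_stat[OF ts(2)]] ts by simp
      then show ?thesis using psi ah by simp
    qed
  qed
  have "sin t1 = sin ts \<and> cos t1 = cos ts"
    by (rule minimizer_sc[OF r a _ _ ts(2) cu m1 psi_case]) (use ts in auto)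
  moreover have "sin t2 = sin ts \<and> cos t2 = cos ts"
    by (rule minimizer_sc[OF r a _ _ ts(2) cu m2 psi_case]) (use ts in auto)
  ultimately show ?thesis by simp
qed

lemma arm_nonuniq:
  assumes r: "0 < r" "r < - (rhoC C 0 - hC C 0)"
  shows "\<exists>t1 t2. (\<forall>\<phi>. Fp C r 0 t1 \<le> Fp C r 0 \<phi>) \<and> (\<forall>\<phi>. Fp C r 0 t2 \<le> Fp C r 0 \<phi>)
     \<and> \<not> (sin t1 = sin t2 \<and> cos t1 = cos t2)"
proof -
  obtain ts where ts: "ts \<in> {0..pi / real n}" "\<forall>\<phi>. Fp C r 0 ts \<le> Fp C r 0 \<phi>"
    using chamber_min[of r 0] r half_pos by auto
  have "ts \<noteq> 0"
  proof
    assume ts0: "ts = 0"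
    have "\<forall>\<^sub>F s in at_right 0. PiC C s < - r"
      using order_tendstoD(2)[OF Pi_lim] r by simp
    then obtain b where b: "b > 0" "\<And>s. 0 < s \<Longrightarrow> s < b \<Longrightarrow> PiC C s < - r"
      unfolding eventually_at_right_field by auto
    define d where "d = min (b / 2) (pi / real n)"
    have d: "0 < d" "d < b" "d \<le> pi / real n" unfolding d_def using b half_pos by auto
    have "Fp C r 0 d < Fp C r 0 0"
    proof (rule DERIV_neg_imp_decreasing_open[OF d(1)])
      fix x assume x: "0 < x" "x < d"
      have xpi: "x < pi" using x d half_lt by simp
      have sx: "sin x > 0" using x d sin_pos_half by simp
      have "PiH C x < - r" using b(2)[of x] x d PiC_eq[of x] xpi by simp
      then have "Gp C r 0 x < 0" using Gp_PiH[of x r 0] sx by (simp add: mult_pos_neg)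
      then show "\<exists>y. DERIV (Fp C r 0) x :> y \<and> y < 0" using Fp_deriv by blast
    next
      show "continuous_on {0..d} (Fp C r 0)" by (intro continuous_at_imp_continuous_on ballI Fp_cont)
    qed
    then show False using ts(2) ts0 by (meson not_le)
  qed
  then have tsp: "ts > 0" using ts by simp
  have "Fp C r 0 (- ts) = Fp C r 0 ts"
    using Fp_sym[of "-1" r 0 0 ts] by simp
  then have m2: "\<forall>\<phi>. Fp C r 0 (- ts) \<le> Fp C r 0 \<phi>" using ts by simp
  have "sin ts > 0" using sin_pos_half tsp ts by simp
  then have "\<not> (sin ts = sin (- ts) \<and> cos ts = cos (- ts))" by simp
  then show ?thesis using ts(2) m2 by blast
qed

lemma origin_nonuniq:
  "\<exists>t1 t2. (\<forall>\<phi>. Fp C 0 0 t1 \<le> Fp C 0 0 \<phi>) \<and> (\<forall>\<phi>. Fp C 0 0 t2 \<le> Fp C 0 0 \<phi>)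
     \<and> \<not> (sin t1 = sin t2 \<and> cos t1 = cos t2)"
proof -
  obtain ts where ts: "ts \<in> {0..pi / real n}" "\<forall>\<phi>. Fp C 0 0 ts \<le> Fp C 0 0 \<phi>"
    using chamber_min[of 0 0] half_pos by auto
  have "Fp C 0 0 (1 * ts + real_of_int 1 * cn n) = Fp C 0 0 ts"
    unfolding Fp_def using h_sym'[of 1 ts 1] by simp
  then have m2: "\<forall>\<phi>. Fp C 0 0 (ts + cn n) \<le> Fp C 0 0 \<phi>" using ts by simp
  have "\<not> (sin ts = sin (ts + cn n) \<and> cos ts = cos (ts + cn n))"
  proof
    assume "sin ts = sin (ts + cn n) \<and> cos ts = cos (ts + cn n)"
    then obtain k :: int where "ts = ts + cn n + 2 * pi * k" using sin_cos_eq_iff by metis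
    then have "cn n = - 2 * pi * k" by simp
    then have e: "2 * pi = real n * (- 2 * pi * k)" using two_pi_cn by simp
    have "pi * (1 + real n * real_of_int k) = 0" using e by algebra
    then have "1 + real n * real_of_int k = 0" using pi_gt_zero by simp
    then have "real_of_int (1 + int n * k) = 0" by simp
    then have "1 + int n * k = 0" by (simp only: of_int_eq_0_iff)
    then have "int n * (- k) = 1" by simp
    then have "int n dvd int 1" by (metis dvd_triv_left of_nat_1)
    then have "n dvd 1" by (simp only: int_dvd_int_iff)
    then show False using n2 by simp
  qed
  then show ?thesis using ts(2) m2 by blast
qed

end

lemma norm_on: "norm (outer_normal a) = 1"
  unfolding outer_normal_def by (simp add: norm_Pair)

lemma sc_shift:
  assumes e: "e = 1 \<or> e = (-1::real)"
  shows "(sin (e * s1 + b) = sin (e * s2 + b) \<and> cos (e * s1 + b) = cos (e * s2 + b))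
     \<longleftrightarrow> (sin s1 = sin s2 \<and> cos s1 = cos s2)"
proof
  assume "sin (e * s1 + b) = sin (e * s2 + b) \<and> cos (e * s1 + b) = cos (e * s2 + b)"
  then obtain j :: int where j: "e * s1 + b = e * s2 + b + 2 * pi * j" using sin_cos_eq_iff by metis
  show "sin s1 = sin s2 \<and> cos s1 = cos s2"
  proof (cases "e = 1")
    case True then have "s1 = s2 + 2 * pi * j" using j by simp
    then show ?thesis by (metis sin_cos_eq_iff)
  next
    case False then have "e = -1" using e by simp
    then have "s1 = s2 + 2 * pi * real_of_int (- j)" using j by simp
    then show ?thesis by (metis sin_cos_eq_iff)
  qed
next
  assume "sin s1 = sin s2 \<and> cos s1 = cos s2"
  then obtain j :: int where j: "s1 = s2 + 2 * pi * j" using sin_cos_eq_iff by metis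
  show "sin (e * s1 + b) = sin (e * s2 + b) \<and> cos (e * s1 + b) = cos (e * s2 + b)"
  proof (cases "e = 1")
    case True then have "e * s1 + b = e * s2 + b + 2 * pi * j" using j by simp
    then show ?thesis by (metis sin_cos_eq_iff)
  next
    case False then have "e = -1" using e by simp
    then have "e * s1 + b = e * s2 + b + 2 * pi * real_of_int (- j)" using j by (simp add: algebra_simps)
    then show ?thesis by (metis sin_cos_eq_iff)
  qed
qed

context cv
begin

lemma argmin_iff: "fC C p t = PhiC C p \<longleftrightarrow> (\<forall>\<phi>. fC C p t \<le> fC C p \<phi>)"
proof
  assume "fC C p t = PhiC C p" then show "\<forall>\<phi>. fC C p t \<le> fC C p \<phi>" using Phi_le by simp
next
  assume a: "\<forall>\<phi>. fC C p t \<le> fC C p \<phi>"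
  obtain t0 where "PhiC C p = fC C p t0" using Phi_attained by blast
  then show "fC C p t = PhiC C p" using a Phi_le[of p t] by (metis antisym)
qed

lemma polar:
  obtains r a where "r \<ge> 0" "p = r *\<^sub>R outer_normal a"
proof (cases "p = 0")
  case True then show ?thesis using that[of 0 0] by simp
next
  case False
  obtain t where t: "ip p t = norm p" using dir_exists[OF False] by blast
  have "(norm p)^2 = (ip p t)^2 + (fst p * cos t + snd p * sin t)^2" by (rule norm_sq_rot)
  then have w: "fst p * cos t + snd p * sin t = 0" using t by simp
  have sc1: "(sin t)^2 + (cos t)^2 = 1" by simp
  have "fst p = ip p t * sin t + (fst p * cos t + snd p * sin t) * cos t"
    using sc1 unfolding ip_def by algebra
  moreover have "snd p = - ip p t * cos t + (fst p * cos t + snd p * sin t) * sin t"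
    using sc1 unfolding ip_def by algebra
  ultimately have "p = norm p *\<^sub>R outer_normal t"
    using w t unfolding outer_normal_def by (simp add: prod_eq_iff)
  then show ?thesis using that[of "norm p" t] by simp
qed

lemma fC_reduce:
  assumes e: "e = 1 \<or> e = -1" and p: "p = r *\<^sub>R outer_normal (e * a0 + real_of_int k * cn n)"
  shows "fC C p (e * s + real_of_int k * cn n) = Fp C r a0 s"
  using p fC_polar Fp_sym[OF e] by simp

lemma fC_reduce':
  assumes e: "e = 1 \<or> e = -1" and p: "p = r *\<^sub>R outer_normal (e * a0 + real_of_int k * cn n)"
  shows "fC C p t = Fp C r a0 (e * (t - real_of_int k * cn n))"
proof -
  have "t = e * (e * (t - real_of_int k * cn n)) + real_of_int k * cn n" using e by auto
  then have "fC C p t = fC C p (e * (e * (t - real_of_int k * cn n)) + real_of_int k * cn n)" by simp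
  also have "\<dots> = Fp C r a0 (e * (t - real_of_int k * cn n))" by (rule fC_reduce[OF e p])
  finally show ?thesis .
qed

lemma nonuniq_to_Fp:
  assumes e: "e = 1 \<or> e = -1" and p: "p = r *\<^sub>R outer_normal (e * a0 + real_of_int k * cn n)"
    and nu: "\<not> uniqC C p"
  shows "\<exists>s1 s2. (\<forall>\<phi>. Fp C r a0 s1 \<le> Fp C r a0 \<phi>) \<and> (\<forall>\<phi>. Fp C r a0 s2 \<le> Fp C r a0 \<phi>)
     \<and> \<not> (sin s1 = sin s2 \<and> cos s1 = cos s2)"
proof -
  obtain t1 t2 where t: "fC C p t1 = PhiC C p" "fC C p t2 = PhiC C p" "\<not> (sin t1 = sin t2 \<and> cos t1 = cos t2)"
    using nu unfolding uniqC_def by blast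
  define s1 where "s1 = e * (t1 - real_of_int k * cn n)"
  define s2 where "s2 = e * (t2 - real_of_int k * cn n)"
  have ts: "t1 = e * s1 + real_of_int k * cn n" "t2 = e * s2 + real_of_int k * cn n"
    unfolding s1_def s2_def using e by auto
  have m: "\<forall>\<phi>. Fp C r a0 si \<le> Fp C r a0 \<phi>" if "fC C p ti = PhiC C p" "ti = e * si + real_of_int k * cn n" for si ti
  proof
    fix \<phi>
    have "Fp C r a0 si = fC C p ti" using fC_reduce[OF e p] that(2) by simp
    also have "\<dots> \<le> fC C p (e * \<phi> + real_of_int k * cn n)" using that(1) Phi_le by simp
    also have "\<dots> = Fp C r a0 \<phi>" by (rule fC_reduce[OF e p])
    finally show "Fp C r a0 si \<le> Fp C r a0 \<phi>" .
  qed
  have "\<not> (sin s1 = sin s2 \<and> cos s1 = cos s2)" using t(3) sc_shift[OF e] ts by simp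
  then show ?thesis using m[OF t(1) ts(1)] m[OF t(2) ts(2)] by blast
qed

lemma Fp_to_nonuniq:
  assumes e: "e = 1 \<or> e = -1" and p: "p = r *\<^sub>R outer_normal (e * a0 + real_of_int k * cn n)"
    and s: "\<forall>\<phi>. Fp C r a0 s1 \<le> Fp C r a0 \<phi>" "\<forall>\<phi>. Fp C r a0 s2 \<le> Fp C r a0 \<phi>"
    "\<not> (sin s1 = sin s2 \<and> cos s1 = cos s2)"
  shows "\<not> uniqC C p"
proof -
  have m: "fC C p (e * si + real_of_int k * cn n) = PhiC C p" if "\<forall>\<phi>. Fp C r a0 si \<le> Fp C r a0 \<phi>" for si
    unfolding argmin_iff
  proof
    fix \<phi>
    show "fC C p (e * si + real_of_int k * cn n) \<le> fC C p \<phi>"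
      using fC_reduce[OF e p] fC_reduce'[OF e p] that by simp
  qed
  have "\<not> (sin (e * s1 + real_of_int k * cn n) = sin (e * s2 + real_of_int k * cn n) \<and>
           cos (e * s1 + real_of_int k * cn n) = cos (e * s2 + real_of_int k * cn n))"
    using s(3) sc_shift[OF e] by simp
  then show ?thesis using m[OF s(1)] m[OF s(2)] unfolding uniqC_def by blast
qed

lemma Phi_reduce:
  assumes e: "e = 1 \<or> e = -1"
  shows "PhiC C (r *\<^sub>R outer_normal (e * a0 + real_of_int k * cn n)) = PhiC C (r *\<^sub>R outer_normal a0)"
proof -
  define p where "p = r *\<^sub>R outer_normal (e * a0 + real_of_int k * cn n)"
  define q where "q = r *\<^sub>R outer_normal a0"
  obtain tp where tp: "PhiC C p = fC C p tp" using Phi_attained by blast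
  obtain tq where tq: "PhiC C q = fC C q tq" using Phi_attained by blast
  have "PhiC C p \<le> fC C p (e * tq + real_of_int k * cn n)" by (rule Phi_le)
  also have "\<dots> = Fp C r a0 tq" using fC_reduce[OF e p_def] .
  also have "\<dots> = PhiC C q" using tq unfolding q_def by (simp add: fC_polar)
  finally have a: "PhiC C p \<le> PhiC C q" .
  have "PhiC C q \<le> fC C q (e * (tp - real_of_int k * cn n))" by (rule Phi_le)
  also have "\<dots> = fC C p tp" using fC_reduce'[OF e p_def] unfolding q_def by (simp add: fC_polar)
  finally have b: "PhiC C q \<le> PhiC C p" using tp by simp
  show ?thesis using a b unfolding p_def q_def by simp
qed

lemma Phi_concave:
  assumes "0 \<le> l" "l \<le> 1"
  shows "(1 - l) * PhiC C p + l * PhiC C q \<le> PhiC C ((1 - l) *\<^sub>R p + l *\<^sub>R q)"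
proof -
  obtain t where t: "PhiC C ((1 - l) *\<^sub>R p + l *\<^sub>R q) = fC C ((1 - l) *\<^sub>R p + l *\<^sub>R q) t"
    using Phi_attained by blast
  have "fC C ((1 - l) *\<^sub>R p + l *\<^sub>R q) t = (1 - l) * fC C p t + l * fC C q t"
    unfolding fC_ip ip_add ip_scale by (simp add: algebra_simps)
  moreover have "(1 - l) * PhiC C p \<le> (1 - l) * fC C p t" using assms Phi_le by (intro mult_left_mono) auto
  moreover have "l * PhiC C q \<le> l * fC C q t" using assms Phi_le by (intro mult_left_mono) auto
  ultimately show ?thesis using t by simp
qed

lemma C_inj: "C s = C t \<Longrightarrow> \<exists>k::int. s = t + 2 * pi * k"
proof -
  assume eq: "C s = C t"
  obtain i :: int where i: "0 \<le> s - 2 * pi * i" "s - 2 * pi * i < 2 * pi" by (rule reduce_2pi)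
  obtain j :: int where j: "0 \<le> t - 2 * pi * j" "t - 2 * pi * j < 2 * pi" by (rule reduce_2pi)
  have "C (s - 2 * pi * i) = C s" using C_per_int[of "s - 2 * pi * i" i] by simp
  moreover have "C (t - 2 * pi * j) = C t" using C_per_int[of "t - 2 * pi * j" j] by simp
  moreover have "inj_on C {0..<2 * pi}" using cc unfolding curve_class_def by blast
  moreover have "s - 2 * pi * i \<in> {0..<2 * pi}" "t - 2 * pi * j \<in> {0..<2 * pi}" using i j by auto
  ultimately have "s - 2 * pi * i = t - 2 * pi * j" using eq by (metis inj_onD)
  then have "s = t + 2 * pi * real_of_int (i - j)" by (simp add: algebra_simps)
  then show ?thesis by blast
qed

lemma cn_not_int: "cn n \<noteq> 2 * pi * real_of_int k"
proof
  assume "cn n = 2 * pi * real_of_int k"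
  then have e: "2 * pi = real n * (2 * pi * k)" using two_pi_cn by simp
  have "pi * (1 - real n * real_of_int k) = 0" using e by algebra
  then have "1 - real n * real_of_int k = 0" using pi_gt_zero by simp
  then have "real_of_int (1 - int n * k) = 0" by simp
  then have "1 - int n * k = 0" by (simp only: of_int_eq_0_iff)
  then have "int n * k = 1" by simp
  then have "int n dvd int 1" by (metis dvd_triv_left of_nat_1)
  then have "n dvd 1" by (simp only: int_dvd_int_iff)
  then show False using n2 by simp
qed

lemma sum_trig:
  "(\<Sum>k<n. sin (x + real k * cn n)) = 0 \<and> (\<Sum>k<n. cos (x + real k * cn n)) = 0"
proof -
  define d where "d = cn n / 2"
  have d: "0 < d" "d \<le> pi / 2" unfolding d_def using cn_half half_le half_pos by auto
  have sd: "sin d > 0" using d by (intro sin_gt_zero) auto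
  have nd: "x + real n * cn n - d = (x - d) + 2 * pi * real_of_int 1" using two_pi_cn by simp
  have per: "sin (x + real n * cn n - d) = sin (x - d) \<and> cos (x + real n * cn n - d) = cos (x - d)"
    unfolding nd by (rule sin_cos_eq_iff[THEN iffD2]) blast
  define g where "g k = sin (x + real k * cn n - d)" for k :: nat
  define G where "G k = cos (x + real k * cn n - d)" for k :: nat
  have gk: "2 * sin d * cos (x + real k * cn n) = g (Suc k) - g k" for k
  proof -
    have e: "x + real (Suc k) * cn n - d = (x + real k * cn n) + d" unfolding d_def by (simp add: algebra_simps)
    have "g (Suc k) = sin ((x + real k * cn n) + d)" by (simp only: g_def e)
    moreover have "g k = sin ((x + real k * cn n) - d)" unfolding g_def by simp
    ultimately show ?thesis by (simp add: sin_add sin_diff)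
  qed
  have Gk: "2 * sin d * sin (x + real k * cn n) = G k - G (Suc k)" for k
  proof -
    have e: "x + real (Suc k) * cn n - d = (x + real k * cn n) + d" unfolding d_def by (simp add: algebra_simps)
    have "G (Suc k) = cos ((x + real k * cn n) + d)" by (simp only: G_def e)
    moreover have "G k = cos ((x + real k * cn n) - d)" unfolding G_def by simp
    ultimately show ?thesis by (simp add: cos_add cos_diff)
  qed
  have "2 * sin d * (\<Sum>k<n. cos (x + real k * cn n)) = (\<Sum>k<n. g (Suc k) - g k)"
    by (simp add: sum_distrib_left gk)
  also have "\<dots> = g n - g 0" by (rule sum_lessThan_telescope)
  also have "\<dots> = 0" unfolding g_def using per by simp
  finally have c: "(\<Sum>k<n. cos (x + real k * cn n)) = 0" using sd by simp
  have "2 * sin d * (\<Sum>k<n. sin (x + real k * cn n)) = (\<Sum>k<n. G k - G (Suc k))"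
    by (simp add: sum_distrib_left Gk)
  also have "\<dots> = G 0 - G n" by (rule sum_lessThan_telescope')
  also have "\<dots> = 0" unfolding G_def using per by simp
  finally have s: "(\<Sum>k<n. sin (x + real k * cn n)) = 0" using sd by simp
  show ?thesis using s c by simp
qed

lemma S_rot_iter: "q \<in> S \<Longrightarrow> rot (- (real k * cn n)) q \<in> S"
proof (induction k)
  case 0 then show ?case using rot_0 by simp
next
  case (Suc k)
  have "rot (- (real (Suc k) * cn n)) q = rot (- cn n) (rot (- (real k * cn n)) q)"
    using rot_rot[of "- cn n" "- (real k * cn n)" q] by (simp add: algebra_simps)
  also have "\<dots> \<in> S" using S_rot_neg Suc unfolding cn_def by simp
  finally show ?case .
qed

lemma h_nonneg: "hC C t \<ge> 0"
proof -
  define q where "q = C t"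
  have q: "q \<in> S" unfolding q_def by (rule C_in_S)
  have "(\<Sum>k<n. ip q (t + real k * cn n)) = fst q * (\<Sum>k<n. sin (t + real k * cn n)) - snd q * (\<Sum>k<n. cos (t + real k * cn n))"
    unfolding ip_def by (simp add: sum_distrib_left sum_subtractf)
  also have "\<dots> = 0" using sum_trig by simp
  finally have s0: "(\<Sum>k<n. ip q (t + real k * cn n)) = 0" .
  have "ip q (t + real k * cn n) \<le> hC C t" for k
  proof -
    have "ip q (t + real k * cn n) = ip (rot (- (real k * cn n)) q) t"
      using ip_rot[of "- (real k * cn n)" q "t + real k * cn n"] by simp
    also have "\<dots> \<le> hC C t" by (rule S_support[OF S_rot_iter[OF q]])
    finally show ?thesis .
  qed
  then have "(\<Sum>k<n. ip q (t + real k * cn n)) \<le> (\<Sum>k<n. hC C t)" by (intro sum_mono)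
  then have "0 \<le> real n * hC C t" using s0 by simp
  then show ?thesis using n2 by (simp add: zero_le_mult_iff)
qed

lemma Phi0_pos: "PhiC C 0 > 0"
proof -
  have f0: "fC C 0 t = hC C t" for t unfolding fC_def by simp
  obtain t0 where t0: "PhiC C 0 = fC C 0 t0" using Phi_attained by blast
  have ge: "PhiC C 0 \<ge> 0" using t0 f0 h_nonneg by simp
  show ?thesis
  proof (rule ccontr)
    assume "\<not> ?thesis"
    then have z: "PhiC C 0 = 0" using ge by simp
    then have "0 \<in> S" by (rule Phi_zero_S)
    then obtain s where s: "C s = 0" unfolding curve_image_def by auto
    have hs: "hC C s = 0" using s unfolding hC_def by simp
    have "hC C (s + cn n) = 0" using h_rot1[of s] hs unfolding cn_def by simp
    then have am: "fC C 0 (s + cn n) = PhiC C 0" using z f0 by simp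
    then have "fdC C 0 (s + cn n) = 0" by (rule argmin_stat)
    then have "hdC C (s + cn n) = 0" unfolding fdC_def by simp
    then have "0 = C (s + cn n)"
      using \<open>hC C (s + cn n) = 0\<close> by (intro coord) (auto simp: ip_def)
    then have "C (s + cn n) = C s" using s by simp
    then obtain k :: int where "s + cn n = s + 2 * pi * k" using C_inj by blast
    then show False using cn_not_int[of k] by simp
  qed
qed

lemma C0_eq: "C 0 = hC C 0 *\<^sub>R outer_normal 0"
proof -
  have "fst (C 0) = 0" using hd_zero unfolding hdC_def by simp
  moreover have "hC C 0 = - snd (C 0)" unfolding hC_def by simp
  ultimately show ?thesis unfolding outer_normal_def by (simp add: prod_eq_iff)
qed

lemma arm_domain:
  assumes r: "0 \<le> r" "r < hC C 0"
  shows "PhiC C (r *\<^sub>R outer_normal 0) > 0"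
proof -
  have h0: "hC C 0 > 0" using r by simp
  define l where "l = r / hC C 0"
  have l: "0 \<le> l" "l < 1" unfolding l_def using r h0 by (auto simp: field_simps)
  have "r *\<^sub>R outer_normal 0 = (1 - l) *\<^sub>R (0::pt) + l *\<^sub>R C 0"
    unfolding l_def C0_eq using h0 by simp
  moreover have "(1 - l) * PhiC C 0 + l * PhiC C (C 0) \<le> PhiC C ((1 - l) *\<^sub>R (0::pt) + l *\<^sub>R C 0)"
    using l by (intro Phi_concave) auto
  moreover have "PhiC C (C 0) = 0" using Phi_S[OF C_in_S] .
  moreover have "(1 - l) * PhiC C 0 > 0" using l Phi0_pos by simp
  ultimately show ?thesis by simp
qed

end

definition Ostar :: "nat \<Rightarrow> real \<Rightarrow> pt set" where
  "Ostar n L = {r *\<^sub>R outer_normal (real k * cn n) | r k. 0 \<le> r \<and> r \<le> - L \<and> k < n}"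

lemma Ostar_I: "0 \<le> r \<Longrightarrow> r \<le> - L \<Longrightarrow> k < n \<Longrightarrow> r *\<^sub>R outer_normal (real k * cn n) \<in> Ostar n L"
  unfolding Ostar_def by blast

lemma Ostar_E: "x \<in> Ostar n L \<Longrightarrow> (\<And>r k. 0 \<le> r \<Longrightarrow> r \<le> - L \<Longrightarrow> k < n \<Longrightarrow> x = r *\<^sub>R outer_normal (real k * cn n) \<Longrightarrow> P) \<Longrightarrow> P"
  unfolding Ostar_def by blast

lemma rot_cong: "sin a = sin b \<Longrightarrow> cos a = cos b \<Longrightarrow> rot a = rot b"
  unfolding rot_def by (simp add: fun_eq_iff)

lemma rot_0_id: "rot 0 = id" unfolding rot_def by (simp add: fun_eq_iff)

lemma refl_rot: "reflD \<circ> rot a = rot (- a) \<circ> reflD"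
  unfolding rot_def reflD_def by (simp add: fun_eq_iff)

lemma refl_refl: "reflD \<circ> reflD = id" unfolding reflD_def by (simp add: fun_eq_iff)

lemma rot_comp: "rot a \<circ> rot b = rot (a + b)" using rot_rot by (simp add: fun_eq_iff)

lemma rot_axis: "rot a (0, s) = (- s) *\<^sub>R outer_normal a"
  unfolding rot_def outer_normal_def by simp

lemma refl_axis: "reflD (0, s) = (0, s)" unfolding reflD_def by simp

lemma Gn_cases:
  assumes "g \<in> Gn n"
  shows "\<exists>k::int. g = rot (real_of_int k * cn n) \<or> g = rot (real_of_int k * cn n) \<circ> reflD"
  using assms
proof (induction rule: Gn.induct)
  case Gn_id
  show ?case by (intro exI[of _ 0]) (simp add: rot_0_id)
next
  case (Gn_refl g)
  then obtain k :: int where k: "g = rot (real_of_int k * cn n) \<or> g = rot (real_of_int k * cn n) \<circ> reflD" by blast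
  then show ?case
  proof
    assume g: "g = rot (real_of_int k * cn n)"
    have "reflD \<circ> g = rot (real_of_int (- k) * cn n) \<circ> reflD" unfolding g refl_rot by simp
    then show ?case by blast
  next
    assume g: "g = rot (real_of_int k * cn n) \<circ> reflD"
    have "reflD \<circ> g = rot (- (real_of_int k * cn n)) \<circ> (reflD \<circ> reflD)"
      unfolding g by (metis comp_assoc refl_rot)
    also have "\<dots> = rot (real_of_int (- k) * cn n)" by (simp add: refl_refl)
    finally show ?case by blast
  qed
next
  case (Gn_rot g)
  then obtain k :: int where k: "g = rot (real_of_int k * cn n) \<or> g = rot (real_of_int k * cn n) \<circ> reflD" by blast
  have ang: "2 * pi / real n + real_of_int k * cn n = real_of_int (k + 1) * cn n"
    unfolding cn_def by (simp add: add_divide_distrib distrib_right)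
  have r: "rot (2 * pi / real n) \<circ> rot (real_of_int k * cn n) = rot (real_of_int (k + 1) * cn n)"
    by (simp only: rot_comp ang)
  from k show ?case
  proof
    assume g: "g = rot (real_of_int k * cn n)"
    show ?case using r unfolding g by blast
  next
    assume g: "g = rot (real_of_int k * cn n) \<circ> reflD"
    have "rot (2 * pi / real n) \<circ> g = rot (real_of_int (k + 1) * cn n) \<circ> reflD"
      unfolding g using r by (simp add: comp_assoc[symmetric])
    then show ?case by blast
  qed
qed

context cv
begin

lemma rot_nat_Gn: "rot (real k * cn n) \<in> Gn n"
proof (induction k)
  case 0
  have e: "rot (real 0 * cn n) = id" using rot_0_id by simp
  show ?case using e Gn.Gn_id by metis
next
  case (Suc k)
  have ang: "2 * pi / real n + real k * cn n = real (Suc k) * cn n"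
    unfolding cn_def by (simp add: add_divide_distrib distrib_right)
  have "rot (real (Suc k) * cn n) = rot (2 * pi / real n) \<circ> rot (real k * cn n)"
    by (simp only: rot_comp ang)
  then show ?case by (simp only:) (rule Gn.Gn_rot[OF Suc])
qed

lemma int_to_nat:
  obtains k' :: nat where "k' < n" "sin (real_of_int k * cn n) = sin (real k' * cn n)"
    "cos (real_of_int k * cn n) = cos (real k' * cn n)"
proof -
  define k' where "k' = nat (k mod int n)"
  have kn: "k mod int n = int k'" unfolding k'_def using n2 by simp
  have "k' < n" unfolding k'_def using n2 by (simp add: nat_less_iff)
  moreover have "real_of_int k * cn n = real k' * cn n + 2 * pi * real_of_int (k div int n)"
  proof -
    have e: "k = k div int n * int n + int k'" using kn by (metis div_mult_mod_eq)
    have "real_of_int k = real_of_int (k div int n * int n + int k')" using e by (rule arg_cong)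
    also have "\<dots> = real_of_int (k div int n) * real n + real k'" by simp
    finally have "real_of_int k = real_of_int (k div int n) * real n + real k'" .
    then have "real_of_int k * cn n = real_of_int (k div int n) * (real n * cn n) + real k' * cn n"
      by (simp add: algebra_simps)
    then show ?thesis using two_pi_cn by simp
  qed
  then have "sin (real_of_int k * cn n) = sin (real k' * cn n) \<and> cos (real_of_int k * cn n) = cos (real k' * cn n)"
    by (intro sin_cos_eq_iff[THEN iffD2]) blast
  ultimately show ?thesis using that by blast
qed

lemma on_int_nat:
  obtains k' :: nat where "k' < n" "outer_normal (real_of_int k * cn n) = outer_normal (real k' * cn n)"
    "rot (real_of_int k * cn n) = rot (real k' * cn n)"
proof -
  obtain k' where k': "k' < n" "sin (real_of_int k * cn n) = sin (real k' * cn n)"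
    "cos (real_of_int k * cn n) = cos (real k' * cn n)" by (rule int_to_nat)
  have "rot (real_of_int k * cn n) = rot (real k' * cn n)" by (rule rot_cong[OF k'(2,3)])
  moreover have "outer_normal (real_of_int k * cn n) = outer_normal (real k' * cn n)"
    unfolding outer_normal_def using k'(2,3) by simp
  ultimately show ?thesis using that[OF k'(1)] by blast
qed

lemma orbit_eq: "Gn_orbit n ({0} \<times> {L..0}) = Ostar n L"
proof
  show "Gn_orbit n ({0} \<times> {L..0}) \<subseteq> Ostar n L"
  proof
    fix x assume "x \<in> Gn_orbit n ({0} \<times> {L..0})"
    then obtain g s where g: "g \<in> Gn n" and s: "L \<le> s" "s \<le> 0" and x: "x = g (0, s)"
      unfolding Gn_orbit_def by auto
    obtain k :: int where k: "g = rot (real_of_int k * cn n) \<or> g = rot (real_of_int k * cn n) \<circ> reflD"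
      using Gn_cases[OF g] by blast
    have "x = rot (real_of_int k * cn n) (0, s)" using k x refl_axis by auto
    also have "\<dots> = (- s) *\<^sub>R outer_normal (real_of_int k * cn n)" by (rule rot_axis)
    finally have x2: "x = (- s) *\<^sub>R outer_normal (real_of_int k * cn n)" .
    obtain k' where "k' < n" "outer_normal (real_of_int k * cn n) = outer_normal (real k' * cn n)"
      by (rule on_int_nat)
    then show "x \<in> Ostar n L" using x2 s Ostar_I[of "- s" L k'] by simp
  qed
next
  show "Ostar n L \<subseteq> Gn_orbit n ({0} \<times> {L..0})"
  proof
    fix x assume "x \<in> Ostar n L"
    then obtain r k where r: "0 \<le> r" "r \<le> - L" "k < n" and x: "x = r *\<^sub>R outer_normal (real k * cn n)"
      by (rule Ostar_E)
    have "x = rot (real k * cn n) (0, - r)" using x rot_axis by simp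
    moreover have "(0, - r) \<in> {0} \<times> {L..0}" using r by auto
    ultimately have "x \<in> rot (real k * cn n) ` ({0} \<times> {L..0})" by (rule image_eqI)
    then show "x \<in> Gn_orbit n ({0} \<times> {L..0})" unfolding Gn_orbit_def by (rule UN_I[OF rot_nat_Gn])
  qed
qed

lemma Ostar_closed: "closed (Ostar n L)"
proof -
  have "Ostar n L = (\<Union>k\<in>{..<n}. (\<lambda>r. r *\<^sub>R outer_normal (real k * cn n)) ` {0..-L})"
  proof
    show "Ostar n L \<subseteq> (\<Union>k\<in>{..<n}. (\<lambda>r. r *\<^sub>R outer_normal (real k * cn n)) ` {0..-L})"
    proof
      fix x assume "x \<in> Ostar n L"
      then obtain r k where r: "0 \<le> r" "r \<le> - L" "k < n" and x: "x = r *\<^sub>R outer_normal (real k * cn n)"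
        by (rule Ostar_E)
      have "x \<in> (\<lambda>r. r *\<^sub>R outer_normal (real k * cn n)) ` {0..-L}" using r x by auto
      then show "x \<in> (\<Union>k\<in>{..<n}. (\<lambda>r. r *\<^sub>R outer_normal (real k * cn n)) ` {0..-L})"
        using r(3) by blast
    qed
    show "(\<Union>k\<in>{..<n}. (\<lambda>r. r *\<^sub>R outer_normal (real k * cn n)) ` {0..-L}) \<subseteq> Ostar n L"
    proof
      fix x assume "x \<in> (\<Union>k\<in>{..<n}. (\<lambda>r. r *\<^sub>R outer_normal (real k * cn n)) ` {0..-L})"
      then obtain k r where "k < n" "r \<in> {0..-L}" "x = r *\<^sub>R outer_normal (real k * cn n)" by blast
      then show "x \<in> Ostar n L" using Ostar_I[of r L k] by simp
    qed
  qed
  moreover have "compact (\<Union>k\<in>{..<n}. (\<lambda>r. r *\<^sub>R outer_normal (real k * cn n)) ` {0..-L})"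
    by (rule compact_UN[OF finite_lessThan], rule compact_continuous_image[OF _ compact_Icc], intro continuous_intros)
  ultimately show ?thesis using compact_imp_closed by metis
qed

abbreviation "Aset \<equiv> {p \<in> domain C. \<not> ((\<lambda>q. infdist q (curve_image C)) differentiable (at p))}"

lemma skel_eq: "skeleton C = closure Aset" unfolding skeleton_def by simp

lemma L0_le0: "mono_on {0..pi / real n} (PiC_ext C) \<Longrightarrow> rhoC C 0 - hC C 0 \<le> 0"
proof -
  assume mono: "mono_on {0..pi / real n} (PiC_ext C)"
  have "PiC_ext C 0 \<le> PiC_ext C (pi / real n)" using half_pos by (intro mono_onD[OF mono]) auto
  moreover have "PiC_ext C (pi / real n) = 0" using PiExt_pos[OF half_pos half_lt] hd_half unfolding PiH_def by simp
  ultimately show ?thesis using PiExt0 by simp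
qed

lemma in_A:
  assumes r: "0 \<le> r" "r = 0 \<or> r < - (rhoC C 0 - hC C 0)"
  shows "r *\<^sub>R outer_normal (real k * cn n) \<in> Aset"
proof -
  define p where "p = r *\<^sub>R outer_normal (real k * cn n)"
  have p': "p = r *\<^sub>R outer_normal (1 * 0 + real_of_int (int k) * cn n)" unfolding p_def by simp
  have "r < hC C 0" using r L0_gt Phi0_pos
  proof -
    have "hC C 0 \<ge> PhiC C 0" using Phi_le[of 0 0] unfolding fC_def by simp
    then have "hC C 0 > 0" using Phi0_pos by simp
    then show ?thesis using r rho_pos[of 0] by auto
  qed
  then have "PhiC C (r *\<^sub>R outer_normal 0) > 0" by (rule arm_domain[OF r(1)])
  moreover have "PhiC C p = PhiC C (r *\<^sub>R outer_normal 0)"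
    unfolding p' by (rule Phi_reduce) simp
  ultimately have "PhiC C p > 0" by simp
  then have dom: "p \<in> domain C" using domain_char by simp
  have nu: "\<not> uniqC C p"
  proof (cases "r = 0")
    case True
    obtain t1 t2 where "\<forall>\<phi>. Fp C 0 0 t1 \<le> Fp C 0 0 \<phi>" "\<forall>\<phi>. Fp C 0 0 t2 \<le> Fp C 0 0 \<phi>"
      "\<not> (sin t1 = sin t2 \<and> cos t1 = cos t2)" using origin_nonuniq by blast
    then show ?thesis using Fp_to_nonuniq[of 1 p 0 0 "int k"] p' True by simp
  next
    case False
    then have "0 < r" "r < - (rhoC C 0 - hC C 0)" using r by auto
    then obtain t1 t2 where "\<forall>\<phi>. Fp C r 0 t1 \<le> Fp C r 0 \<phi>" "\<forall>\<phi>. Fp C r 0 t2 \<le> Fp C r 0 \<phi>"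
      "\<not> (sin t1 = sin t2 \<and> cos t1 = cos t2)" using arm_nonuniq by blast
    then show ?thesis using Fp_to_nonuniq[of 1 p r 0 "int k"] p' by simp
  qed
  then show ?thesis using diff_iff[OF dom] dom unfolding p_def by simp
qed

lemma part1:
  assumes mono: "mono_on {0..pi / real n} (PiC_ext C)"
  shows "skeleton C = Gn_orbit n ({0} \<times> {PiC_ext C 0..0})"
proof -
  define L where "L = rhoC C 0 - hC C 0"
  have L: "PiC_ext C 0 = L" unfolding L_def by (rule PiExt0)
  have L0: "L \<le> 0" unfolding L_def by (rule L0_le0[OF mono])
  have sub: "Aset \<subseteq> Ostar n L"
  proof
    fix p assume pA: "p \<in> Aset"
    then have dom: "p \<in> domain C" by simp
    have nu: "\<not> uniqC C p" using pA diff_iff[OF dom] by simp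
    obtain r a where ra: "r \<ge> 0" "p = r *\<^sub>R outer_normal a" by (rule polar)
    obtain e a0 k where d: "e = 1 \<or> e = -1" "0 \<le> a0" "a0 \<le> pi / real n" "a = e * a0 + real_of_int k * cn n"
      by (rule decomp)
    show "p \<in> Ostar n L"
    proof (cases "r = 0")
      case True
      then have "p = 0 *\<^sub>R outer_normal (real 0 * cn n)" using ra by simp
      then show ?thesis using L0 n2 Ostar_I[of 0 L 0] by simp
    next
      case False
      then have rp: "r > 0" using ra by simp
      have p': "p = r *\<^sub>R outer_normal (e * a0 + real_of_int k * cn n)" using ra d by simp
      obtain s1 s2 where s: "\<forall>\<phi>. Fp C r a0 s1 \<le> Fp C r a0 \<phi>" "\<forall>\<phi>. Fp C r a0 s2 \<le> Fp C r a0 \<phi>"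
        "\<not> (sin s1 = sin s2 \<and> cos s1 = cos s2)" using nonuniq_to_Fp[OF d(1) p' nu] by blast
      have "a0 = 0 \<and> r \<le> - L"
        using uniq_global[OF mono rp d(2,3) _ s(1,2)] s(3) unfolding L_def by blast
      then have p'': "p = r *\<^sub>R outer_normal (real_of_int k * cn n)" using p' by simp
      obtain k' where "k' < n" "outer_normal (real_of_int k * cn n) = outer_normal (real k' * cn n)"
        by (rule on_int_nat)
      then have pk: "p = r *\<^sub>R outer_normal (real k' * cn n)" using p'' by simp
      show ?thesis unfolding pk using ra(1) \<open>a0 = 0 \<and> r \<le> - L\<close> Ostar_I[of r L k'] \<open>k' < n\<close> by simp
    qed
  qed
  have sup: "Ostar n L \<subseteq> closure Aset"
  proof
    fix x assume "x \<in> Ostar n L"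
    then obtain r k where r: "0 \<le> r" "r \<le> - L" "k < n" and x: "x = r *\<^sub>R outer_normal (real k * cn n)"
      by (rule Ostar_E)
    show "x \<in> closure Aset"
    proof (cases "r = 0 \<or> r < - L")
      case True
      have "x \<in> Aset" unfolding x by (rule in_A[OF r(1)]) (use True in \<open>simp add: L_def\<close>)
      then show ?thesis by (rule closure_subset[THEN subsetD])
    next
      case False
      then have rL: "r = - L" "r > 0" using r by auto
      show ?thesis unfolding closure_approachable
      proof (intro allI impI)
        fix \<epsilon> :: real assume \<epsilon>: "\<epsilon> > 0"
        define r' where "r' = max (r / 2) (r - \<epsilon> / 2)"
        have r': "0 < r'" "r' < r" "r - r' < \<epsilon>" unfolding r'_def using rL \<epsilon> by auto
        define y where "y = r' *\<^sub>R outer_normal (real k * cn n)"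
        have rr: "r' < - (rhoC C 0 - hC C 0)" using r' rL unfolding L_def by linarith
        have yA: "y \<in> Aset" unfolding y_def by (rule in_A) (use r' rr in linarith)+
        have "y - x = (r' - r) *\<^sub>R outer_normal (real k * cn n)"
          unfolding x y_def by (simp add: scaleR_diff_left)
        then have "dist y x = \<bar>r' - r\<bar>" unfolding dist_norm using norm_on by simp
        then have "dist y x < \<epsilon>" using r' by simp
        then show "\<exists>y\<in>Aset. dist y x < \<epsilon>" using yA by blast
      qed
    qed
  qed
  have "closure Aset \<subseteq> Ostar n L" using sub Ostar_closed closure_minimal by blast
  then have "closure Aset = Ostar n L" using sup by (rule equalityI)
  then have "skeleton C = Ostar n L" using skel_eq by simp
  then show ?thesis using orbit_eq L by simp
qed

end

context cv
begin

lemma notO: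
  assumes r: "r > 0" and a: "0 < a" "a \<le> pi / real n"
  shows "r *\<^sub>R outer_normal a \<notin> Ostar n L"
proof
  assume "r *\<^sub>R outer_normal a \<in> Ostar n L"
  then obtain r' k where r': "0 \<le> r'" "k < n" and eq: "r *\<^sub>R outer_normal a = r' *\<^sub>R outer_normal (real k * cn n)"
    by (rule Ostar_E) auto
  have "norm (r *\<^sub>R outer_normal a) = r" using r norm_on by simp
  moreover have "norm (r' *\<^sub>R outer_normal (real k * cn n)) = r'" using r' norm_on by simp
  ultimately have rr: "r = r'" using eq by simp
  then have "outer_normal a = outer_normal (real k * cn n)" using eq r by simp
  then have "sin a = sin (real k * cn n) \<and> cos a = cos (real k * cn n)"
    unfolding outer_normal_def by simp
  then obtain j :: int where j: "a = real k * cn n + 2 * pi * j" using sin_cos_eq_iff by metis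
  then have "a = real_of_int (int k + int n * j) * cn n" using two_pi_cn by (simp add: algebra_simps)
  then obtain m :: int where m: "a = real_of_int m * cn n" by blast
  have "0 < real_of_int m * cn n" using a m by simp
  then have "m > 0" using cn_pos by (simp add: zero_less_mult_iff)
  then have "real_of_int m * cn n \<ge> cn n" using cn_pos by simp
  then show False using a m cn_half cn_pos by linarith
qed

lemma uniq_S:
  assumes "PhiC C q = 0"
  shows "uniqC C q"
  unfolding uniqC_def
proof (intro allI impI)
  fix t1 t2 assume t1: "fC C q t1 = PhiC C q" and t2: "fC C q t2 = PhiC C q"
  have "q = C t" if "fC C q t = PhiC C q" for t
  proof -
    have "fdC C q t = 0" using argmin_stat that by simp
    then show ?thesis using that assms by (intro coord) (auto simp: fC_ip fdC_def)
  qed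
  then have "C t1 = C t2" using t1 t2 by metis
  then obtain k :: int where "t1 = t2 + 2 * pi * k" using C_inj by blast
  then show "sin t1 = sin t2 \<and> cos t1 = cos t2" by (metis sin_cos_eq_iff)
qed

lemma chamber_argmin:
  assumes r: "r \<ge> 0" and a: "0 \<le> a" "a \<le> pi / real n"
  shows "\<exists>t\<in>{0..pi / real n}. fC C (r *\<^sub>R outer_normal a) t = PhiC C (r *\<^sub>R outer_normal a)"
proof -
  obtain t where t: "t \<in> {0..pi / real n}" "\<forall>\<phi>. Fp C r a t \<le> Fp C r a \<phi>"
    using chamber_min[OF r a] by blast
  then have "fC C (r *\<^sub>R outer_normal a) t = PhiC C (r *\<^sub>R outer_normal a)"
    by (subst argmin_iff) (simp add: fC_polar)
  then show ?thesis using t by blast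
qed

lemma chamber_eq:
  assumes "0 \<le> t" "t \<le> pi / real n" "0 \<le> t'" "t' \<le> pi / real n" "sin t = sin t'" "cos t = cos t'"
  shows "t = t'"
  using cos_inj_pi[of t t'] assms half_lt by auto

lemma monotone_ineq:
  assumes "fC C p tp = PhiC C p" "fC C q tq = PhiC C q"
  shows "ip (p - q) tp \<ge> ip (p - q) tq"
proof -
  have "PhiC C p \<le> fC C p tq" "PhiC C q \<le> fC C q tp" by (rule Phi_le)+
  then show ?thesis using assms unfolding fC_ip ip_diff by simp
qed

lemma x_deriv': "((\<lambda>t. fst (C t)) has_real_derivative rhoC C t * cos t) (at t)"
  by (rule x_deriv)

lemma x0: "fst (C 0) = 0" using hd_zero unfolding hdC_def by simp

lemma x_strict:
  assumes "0 \<le> s" "s < t" "t \<le> pi / real n"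
  shows "fst (C s) < fst (C t)"
proof (rule DERIV_pos_imp_increasing_open[OF assms(2)])
  fix x assume x: "s < x" "x < t"
  have "x < pi / 2" using x assms half_le by linarith
  then have "cos x > 0" using x assms by (intro cos_gt_zero_pi) auto
  then show "\<exists>y. ((\<lambda>t. fst (C t)) has_real_derivative y) (at x) \<and> y > 0"
    using x_deriv rho_pos by (intro exI[of _ "rhoC C x * cos x"]) auto
next
  show "continuous_on {s..t} (\<lambda>t. fst (C t))"
    by (intro continuous_at_imp_continuous_on ballI) (use x_deriv DERIV_isCont in blast)
qed

end

context cv
begin

lemma part2_core:
  assumes H: "\<And>r a. r > 0 \<Longrightarrow> 0 < a \<Longrightarrow> a \<le> pi / real n \<Longrightarrow> PhiC C (r *\<^sub>R outer_normal a) > 0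
      \<Longrightarrow> uniqC C (r *\<^sub>R outer_normal a)"
    and th: "0 < \<theta>1" "\<theta>1 < \<theta>2" "\<theta>2 < pi / real n"
  shows "PiH C \<theta>1 \<le> PiH C \<theta>2"
proof (rule ccontr)
  assume "\<not> ?thesis"
  then have \<delta>: "PiH C \<theta>1 - PiH C \<theta>2 > 0" by simp
  define \<delta> where "\<delta> = PiH C \<theta>1 - PiH C \<theta>2"
  define K where "K = cos \<theta>1 / sin \<theta>1 - cos \<theta>2 / sin \<theta>2"
  have K: "K > 0" unfolding K_def using cot_strict[of \<theta>1 \<theta>2] th half_lt by simp
  define x1 where "x1 = fst (C \<theta>1)"
  have x1: "x1 > 0" unfolding x1_def using x_strict[of 0 \<theta>1] x0 th by simp
  define sn where "sn = sin (pi / real n)"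
  have sn: "sn > 0" unfolding sn_def using sin_pos_half half_pos by simp
  define \<Phi>0 where "\<Phi>0 = PhiC C 0"
  have \<Phi>0: "\<Phi>0 > 0" unfolding \<Phi>0_def by (rule Phi0_pos)
  define \<epsilon> where "\<epsilon> = Min {x1 / 2, \<delta> / (2 * K), \<Phi>0 * sn / 2}"
  have \<epsilon>: "\<epsilon> > 0" "\<epsilon> \<le> x1 / 2" "\<epsilon> \<le> \<delta> / (2 * K)" "\<epsilon> \<le> \<Phi>0 * sn / 2"
    unfolding \<epsilon>_def using x1 \<delta> K \<Phi>0 sn by (auto simp: \<delta>_def)
  define P where "P a = (\<epsilon> / sin a) *\<^sub>R outer_normal a" for a
  have Pfst: "fst (P a) = \<epsilon>" if "sin a \<noteq> 0" for a
    unfolding P_def outer_normal_def using that by simp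
  have Psnd: "snd (P a) = - \<epsilon> * cos a / sin a" for a
    unfolding P_def outer_normal_def by simp
  define aT where "aT = pi / real n"
  have aT: "0 < aT" "aT < pi" unfolding aT_def using half_pos half_lt by auto
  have Ptop: "PhiC C (P aT) > 0"
  proof -
    have "norm (P aT) = \<epsilon> / sn" unfolding P_def aT_def sn_def using norm_on \<epsilon> sn by (simp add: sn_def)
    also have "\<dots> \<le> \<Phi>0 / 2" using \<epsilon> sn by (simp add: field_simps)
    finally have "dist (P aT) 0 \<le> \<Phi>0 / 2" by simp
    then show ?thesis using Phi_lip[of "P aT" 0] \<Phi>0 unfolding \<Phi>0_def by linarith
  qed
  define h0 where "h0 = hC C 0"
  have h0: "h0 > 0" unfolding h0_def using Phi_le[of 0 0] Phi0_pos unfolding fC_def by simp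
  define K2 where "K2 = (h0 + 1) / \<epsilon>"
  have K2: "K2 > 0" unfolding K2_def using h0 \<epsilon> by simp
  define alo where "alo = min (pi / (2 * real n)) (1 / (2 * K2 + 2))"
  have alo: "0 < alo" "alo < aT" unfolding alo_def aT_def using n2 K2 half_pos by (auto simp: min_def field_simps)
  have Plo: "PhiC C (P alo) < 0"
  proof -
    have sa: "sin alo > 0" using alo aT by (intro sin_gt_zero) auto
    have sle: "sin alo \<le> alo" using alo by (intro sin_x_le_x) simp
    have "alo \<le> pi / 3"
    proof -
      have "alo \<le> pi / (2 * real n)" unfolding alo_def by simp
      also have "\<dots> \<le> pi / 4" using n2 by (intro divide_left_mono) auto
      finally show ?thesis using pi_gt_zero by linarith
    qed
    then have "cos alo \<ge> cos (pi / 3)" using alo by (intro cos_monotone_0_pi_le) auto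
    then have ca: "cos alo \<ge> 1 / 2" using cos_60 by simp
    have "alo \<le> 1 / (2 * K2 + 2)" unfolding alo_def by simp
    then have "1 / alo \<ge> 2 * K2 + 2" using alo K2 by (simp add: field_simps)
    moreover have "cos alo / sin alo \<ge> (1 / 2) / alo"
      using ca sle sa alo by (intro frac_le) auto
    ultimately have cot: "cos alo / sin alo \<ge> K2 + 1" by simp
    have "PhiC C (P alo) \<le> fC C (P alo) 0" by (rule Phi_le)
    also have "\<dots> = h0 + snd (P alo)" unfolding fC_def h0_def by simp
    also have "\<dots> = h0 - \<epsilon> * (cos alo / sin alo)" using Psnd by simp
    also have "\<dots> \<le> h0 - \<epsilon> * (K2 + 1)"
    proof -
      have "\<epsilon> * (K2 + 1) \<le> \<epsilon> * (cos alo / sin alo)" by (rule mult_left_mono[OF cot]) (use \<epsilon> in simp)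
      then show ?thesis by linarith
    qed
    also have "\<dots> = - 1 - \<epsilon>" unfolding K2_def using \<epsilon> by (simp add: field_simps)
    finally show ?thesis using \<epsilon> by simp
  qed
  have Pcont: "isCont P a" if "sin a \<noteq> 0" for a
    unfolding P_def[abs_def] outer_normal_def using that by (intro continuous_intros) auto
  have sin_pos: "sin a > 0" if "0 < a" "a < pi" for a using that by (intro sin_gt_zero)
  have phicont: "continuous_on {alo..aT} (\<lambda>a. PhiC C (P a))"
  proof (intro continuous_at_imp_continuous_on ballI)
    fix a assume "a \<in> {alo..aT}"
    then have "sin a \<noteq> 0" using sin_pos[of a] alo aT by auto
    have PC: "isCont (PhiC C) x" for x using Phi_cont[of UNIV] continuous_on_eq_continuous_at[OF open_UNIV] by blast
    show "isCont (\<lambda>a. PhiC C (P a)) a"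
      using continuous_at_compose[OF Pcont[OF \<open>sin a \<noteq> 0\<close>] PC] by (simp add: comp_def)
  qed
  obtain ab where ab: "alo \<le> ab" "ab \<le> aT" "PhiC C (P ab) = 0"
    using IVT'[of "\<lambda>a. PhiC C (P a)" alo 0 aT] Plo Ptop alo phicont by force
  have ab_lt: "ab < aT" using ab Ptop by (cases "ab = aT") auto
  have ab_pos: "0 < ab" using ab alo by simp
  have snd_mono: "snd (P a) < snd (P b)" if "0 < a" "a < b" "b < pi" for a b
  proof -
    have "\<epsilon> * (cos b / sin b) < \<epsilon> * (cos a / sin a)"
      by (rule mult_strict_left_mono[OF cot_strict[OF that]]) (use \<epsilon> in simp)
    then show ?thesis using Psnd by simp
  qed
  have phipos: "PhiC C (P a) > 0" if a: "ab < a" "a \<le> aT" for a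
  proof (cases "a = aT")
    case True then show ?thesis using Ptop by simp
  next
    case False
    then have aat: "a < aT" using a by simp
    define yb where "yb = snd (P ab)"
    define yt where "yt = snd (P aT)"
    define ya where "ya = snd (P a)"
    have y1: "yb < ya" unfolding yb_def ya_def using snd_mono ab_pos a aT by simp
    have y2: "ya < yt" unfolding yt_def ya_def using snd_mono ab_pos a aat aT by simp
    define l where "l = (ya - yb) / (yt - yb)"
    have l: "0 < l" "l < 1" unfolding l_def using y1 y2 by (auto simp: field_simps)
    have "sin ab > 0" using sin_pos[of ab] ab_pos ab_lt aT by simp
    moreover have "sin aT > 0" using sin_pos[of aT] aT by simp
    moreover have "sin a > 0" using sin_pos[of a] ab_pos a aT by simp
    ultimately have sab: "sin ab \<noteq> 0" "sin aT \<noteq> 0" "sin a \<noteq> 0" by simp_all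
    have "P a = (1 - l) *\<^sub>R P ab + l *\<^sub>R P aT"
    proof -
      have "fst ((1 - l) *\<^sub>R P ab + l *\<^sub>R P aT) = \<epsilon>" using Pfst sab by (simp add: algebra_simps)
      moreover have "snd ((1 - l) *\<^sub>R P ab + l *\<^sub>R P aT) = ya"
      proof -
        have "snd ((1 - l) *\<^sub>R P ab + l *\<^sub>R P aT) = yb + l * (yt - yb)"
          unfolding yb_def yt_def by (simp add: algebra_simps)
        moreover have "l * (yt - yb) = ya - yb" unfolding l_def using y1 y2 by simp
        ultimately show ?thesis by simp
      qed
      ultimately show ?thesis using Pfst[OF sab(3)] unfolding ya_def by (simp add: prod_eq_iff)
    qed
    moreover have "(1 - l) * PhiC C (P ab) + l * PhiC C (P aT) \<le> PhiC C ((1 - l) *\<^sub>R P ab + l *\<^sub>R P aT)"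
      using l by (intro Phi_concave) auto
    moreover have "l * PhiC C (P aT) > 0" using Ptop l by simp
    ultimately show ?thesis using ab(3) by simp
  qed
  have uniq: "uniqC C (P a)" if a: "ab \<le> a" "a \<le> aT" for a
  proof (cases "a = ab")
    case True then show ?thesis using uniq_S ab(3) by simp
  next
    case False
    then have "ab < a" using a by simp
    moreover have "sin a > 0" using sin_pos ab_pos a aT by simp
    ultimately show ?thesis unfolding P_def using H phipos a ab_pos \<epsilon> aT_def
      by (auto simp: P_def)
  qed
  define Th where "Th a = (THE t. t \<in> {0..pi / real n} \<and> fC C (P a) t = PhiC C (P a))" for a
  have Th: "Th a \<in> {0..pi / real n} \<and> fC C (P a) (Th a) = PhiC C (P a)" if a: "ab \<le> a" "a \<le> aT" for a
  proof -
    have sa: "sin a > 0" using sin_pos ab_pos a aT by simp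
    have ex: "\<exists>t\<in>{0..pi / real n}. fC C (P a) t = PhiC C (P a)"
      unfolding P_def by (rule chamber_argmin) (use sa \<epsilon> a ab_pos aT_def in auto)
    have un: "t = t'" if "t \<in> {0..pi / real n}" "fC C (P a) t = PhiC C (P a)"
      "t' \<in> {0..pi / real n}" "fC C (P a) t' = PhiC C (P a)" for t t'
    proof -
      have "sin t = sin t' \<and> cos t = cos t'"
        using uniq[OF a, unfolded uniqC_def, rule_format, OF that(2) that(4)] .
      then show ?thesis using chamber_eq[of t t'] that(1,3) by simp
    qed
    show ?thesis unfolding Th_def by (rule theI') (use ex un in blast)
  qed
  have gcont: "continuous_on {ab..aT} (\<lambda>a. cos (Th a))"
    unfolding continuous_on_iff
  proof (intro ballI allI impI)
    fix a0 e :: real assume a0: "a0 \<in> {ab..aT}" and e: "e > 0"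
    have a0': "ab \<le> a0" "a0 \<le> aT" using a0 by auto
    have "\<exists>d>0. \<forall>q t. dist q (P a0) < d \<longrightarrow> fC C q t = PhiC C q \<longrightarrow> dlt t (Th a0) < e"
      by (rule cont_argmin[OF uniq[OF a0'] Th[OF a0', THEN conjunct2] e])
    then obtain d1 where d1: "d1 > 0" "\<forall>q t. dist q (P a0) < d1 \<longrightarrow> fC C q t = PhiC C q \<longrightarrow> dlt t (Th a0) < e"
      by blast
    have "sin a0 \<noteq> 0" using sin_pos[of a0] a0 ab_pos aT by auto
    then have "isCont P a0" by (rule Pcont)
    then obtain d2 where d2: "d2 > 0" "\<forall>a. dist a a0 < d2 \<longrightarrow> dist (P a) (P a0) < d1"
      using d1(1) unfolding continuous_at_eps_delta by blast
    show "\<exists>d>0. \<forall>a\<in>{ab..aT}. dist a a0 < d \<longrightarrow> dist (cos (Th a)) (cos (Th a0)) < e"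
    proof (intro exI[of _ d2] conjI ballI impI d2(1))
      fix a assume a: "a \<in> {ab..aT}" "dist a a0 < d2"
      have a': "ab \<le> a" "a \<le> aT" using a by auto
      have "dist (P a) (P a0) < d1" using d2(2) a(2) by blast
      then have "dlt (Th a) (Th a0) < e" using d1(2) Th[OF a', THEN conjunct2] by blast
      then show "dist (cos (Th a)) (cos (Th a0)) < e" unfolding dlt_def dist_real_def by linarith
    qed
  qed
  have Thb: "Th ab < \<theta>1"
  proof -
    have tb: "Th ab \<in> {0..pi / real n}" "fC C (P ab) (Th ab) = PhiC C (P ab)" using Th ab by auto
    have "fdC C (P ab) (Th ab) = 0" using argmin_stat tb(2) by simp
    then have "P ab = C (Th ab)" using tb(2) ab(3) by (intro coord) (auto simp: fC_ip fdC_def)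
    moreover have "sin ab \<noteq> 0" using sin_pos[of ab] ab_pos ab_lt aT by simp
    ultimately have "fst (C (Th ab)) = \<epsilon>" using Pfst by metis
    then have "fst (C (Th ab)) < fst (C \<theta>1)" using \<epsilon> x1 unfolding x1_def by simp
    show ?thesis
    proof (rule ccontr)
      assume "\<not> Th ab < \<theta>1"
      then have "\<theta>1 \<le> Th ab" by simp
      moreover have "\<not> \<theta>1 < Th ab" using x_strict[of \<theta>1 "Th ab"] tb th \<open>fst (C (Th ab)) < fst (C \<theta>1)\<close> by auto
      ultimately have "Th ab = \<theta>1" by simp
      then show False using \<open>fst (C (Th ab)) < fst (C \<theta>1)\<close> by simp
    qed
  qed
  have Tht: "Th aT = pi / real n"
  proof -
    have tt: "Th aT \<in> {0..pi / real n}" "fC C (P aT) (Th aT) = PhiC C (P aT)" using Th ab by auto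
    define r where "r = \<epsilon> / sin aT"
    have p1: "P aT = r *\<^sub>R outer_normal (1 * aT + real_of_int 0 * cn n)" unfolding P_def r_def by simp
    have p2: "P aT = r *\<^sub>R outer_normal ((-1) * aT + real_of_int 1 * cn n)"
      unfolding P_def r_def aT_def using cn_half by (simp add: algebra_simps)
    have "fC C (P aT) ((-1) * Th aT + real_of_int 1 * cn n) = Fp C r aT (Th aT)"
      by (rule fC_reduce[OF _ p2]) simp
    also have "\<dots> = fC C (P aT) (1 * Th aT + real_of_int 0 * cn n)"
      by (rule fC_reduce[OF _ p1, symmetric]) simp
    finally have "fC C (P aT) (cn n - Th aT) = PhiC C (P aT)" using tt by simp
    moreover have "ab \<le> aT" using ab by simp
    ultimately have "sin (cn n - Th aT) = sin (Th aT) \<and> cos (cn n - Th aT) = cos (Th aT)"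
      using uniq[of aT, unfolded uniqC_def, rule_format] tt(2) by blast
    then obtain j :: int where j: "cn n - Th aT = Th aT + 2 * pi * j" using sin_cos_eq_iff by metis
    have "j = 0"
    proof (rule ccontr)
      assume "j \<noteq> 0"
      then have "j \<ge> 1 \<or> j \<le> -1" by linarith
      then have "real_of_int j \<ge> 1 \<or> real_of_int j \<le> -1"
        by (metis of_int_le_iff of_int_1 of_int_minus)
      then have "2 * pi * real_of_int j \<ge> 2 * pi * 1 \<or> 2 * pi * real_of_int j \<le> 2 * pi * (-1)"
      proof
        assume "real_of_int j \<ge> 1"
        then have "2 * pi * real_of_int j \<ge> 2 * pi * 1" using pi_gt_zero by (intro mult_left_mono) auto
        then show ?thesis by blast
      next
        assume "real_of_int j \<le> -1"
        then have "2 * pi * real_of_int j \<le> 2 * pi * (-1)" using pi_gt_zero by (intro mult_left_mono) auto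
        then show ?thesis by blast
      qed
      moreover have "cn n \<le> pi" using cn_half half_le by simp
      moreover have "0 \<le> Th aT" "Th aT \<le> cn n / 2" using tt cn_half by auto
      ultimately show False using j cn_pos pi_gt_zero by linarith
    qed
    then show ?thesis using j cn_half by simp
  qed
  have cth: "cos (pi / real n) < cos \<theta>2" "cos \<theta>2 < cos \<theta>1" "cos \<theta>1 < cos (Th ab)"
    using th Thb Th[of ab] ab half_lt by (auto intro!: cos_monotone_0_pi)
  obtain a1 where a1: "ab \<le> a1" "a1 \<le> aT" "cos (Th a1) = cos \<theta>1"
    using IVT2'[of "\<lambda>a. cos (Th a)" aT "cos \<theta>1" ab] gcont Tht cth ab by force
  obtain a2 where a2: "ab \<le> a2" "a2 \<le> aT" "cos (Th a2) = cos \<theta>2"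
    using IVT2'[of "\<lambda>a. cos (Th a)" aT "cos \<theta>2" ab] gcont Tht cth ab by force
  have T1: "Th a1 = \<theta>1" using cos_inj_pi[of "Th a1" \<theta>1] a1 Th[of a1] th half_lt by auto
  have T2: "Th a2 = \<theta>2" using cos_inj_pi[of "Th a2" \<theta>2] a2 Th[of a2] th half_lt by auto
  have m1: "fC C (P a1) \<theta>1 = PhiC C (P a1)" using Th[of a1] a1 T1 by simp
  have m2: "fC C (P a2) \<theta>2 = PhiC C (P a2)" using Th[of a2] a2 T2 by simp
  have "sin a1 > 0" using sin_pos[of a1] a1 ab_pos aT by simp
  moreover have "sin a2 > 0" using sin_pos[of a2] a2 ab_pos aT by simp
  ultimately have sa1: "sin a1 \<noteq> 0" "sin a2 \<noteq> 0" by simp_all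
  define y1 where "y1 = snd (P a1)"
  define y2 where "y2 = snd (P a2)"
  have y12: "y1 \<le> y2"
  proof (rule ccontr)
    assume "\<not> y1 \<le> y2"
    then have d: "y1 - y2 > 0" by simp
    have "ip (P a1 - P a2) \<theta>1 \<ge> ip (P a1 - P a2) \<theta>2" by (rule monotone_ineq[OF m1 m2])
    moreover have "ip (P a1 - P a2) t = - (y1 - y2) * cos t" for t
      unfolding ip_def y1_def y2_def using Pfst sa1 by (simp add: algebra_simps)
    ultimately have "- (y1 - y2) * cos \<theta>1 \<ge> - (y1 - y2) * cos \<theta>2" by metis
    then have "(y1 - y2) * cos \<theta>2 \<ge> (y1 - y2) * cos \<theta>1" by (simp only: mult_minus_left neg_le_iff_le)
    then have "cos \<theta>2 \<ge> cos \<theta>1" using d by simp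
    then show False using cth by simp
  qed
  have yform: "snd (P a) = PiH C t - \<epsilon> * (cos t / sin t)"
    if "fC C (P a) t = PhiC C (P a)" "sin a \<noteq> 0" "sin t > 0" for a t
  proof -
    have "fdC C (P a) t = 0" using argmin_stat that(1) by simp
    then have "hdC C t = \<epsilon> * cos t + snd (P a) * sin t" unfolding fdC_def using Pfst[OF that(2)] by simp
    then show ?thesis unfolding PiH_def using that(3) by (simp add: field_simps)
  qed
  have s1: "sin \<theta>1 > 0" "sin \<theta>2 > 0" using sin_pos_half th by auto
  have "PiH C \<theta>1 - \<epsilon> * (cos \<theta>1 / sin \<theta>1) \<le> PiH C \<theta>2 - \<epsilon> * (cos \<theta>2 / sin \<theta>2)"
    using y12 yform[OF m1 sa1(1) s1(1)] yform[OF m2 sa1(2) s1(2)] unfolding y1_def y2_def by simp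
  then have "\<delta> \<le> \<epsilon> * K" unfolding \<delta>_def K_def by (simp add: algebra_simps)
  also have "\<dots> \<le> \<delta> / 2" using \<epsilon>(3) K by (simp add: field_simps)
  finally show False using \<delta> unfolding \<delta>_def by simp
qed

end

context cv
begin

lemma PiH_mono_closed:
  assumes core: "\<And>t1 t2. 0 < t1 \<Longrightarrow> t1 < t2 \<Longrightarrow> t2 < pi / real n \<Longrightarrow> PiH C t1 \<le> PiH C t2"
    and ab: "0 < a" "a \<le> b" "b \<le> pi / real n"
  shows "PiH C a \<le> PiH C b"
proof (cases "a = b")
  case True then show ?thesis by simp
next
  case False
  then have alb: "a < b" using ab by simp
  show ?thesis
  proof (cases "b < pi / real n")
    case True then show ?thesis using core ab alb by simp
  next
    case False
    then have b: "b = pi / real n" using ab by simp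
    have sb: "sin b \<noteq> 0" using sin_pos_half half_pos b by (metis less_irrefl order_refl)
    have "(PiH C \<longlongrightarrow> PiH C b) (at_left b)"
      using PiH_cont[OF sb] unfolding isCont_def by (rule tendsto_mono[OF at_le, rotated]) simp
    moreover have "\<forall>\<^sub>F s in at_left b. PiH C a \<le> PiH C s"
      unfolding eventually_at_left_field
      by (intro exI[of _ a] conjI alb allI impI) (use core ab b in auto)
    ultimately show ?thesis by (rule tendsto_lowerbound) simp
  qed
qed

lemma L0_le_PiH:
  assumes core: "\<And>t1 t2. 0 < t1 \<Longrightarrow> t1 < t2 \<Longrightarrow> t2 < pi / real n \<Longrightarrow> PiH C t1 \<le> PiH C t2"
    and b: "0 < b" "b \<le> pi / real n"
  shows "rhoC C 0 - hC C 0 \<le> PiH C b"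
proof -
  have "(PiH C \<longlongrightarrow> rhoC C 0 - hC C 0) (at_right 0)"
    using PiH_lim by (rule tendsto_mono[OF at_le, rotated]) simp
  moreover have "\<forall>\<^sub>F s in at_right 0. PiH C s \<le> PiH C b"
    unfolding eventually_at_right_field
    by (intro exI[of _ b] conjI b(1) allI impI) (rule PiH_mono_closed[OF core], use b in auto)
  ultimately show ?thesis by (rule tendsto_upperbound) simp
qed

lemma part2:
  assumes ex: "\<exists>y\<ge>0. skeleton C = Gn_orbit n ({0} \<times> {-y..0})"
  shows "mono_on {0..pi / real n} (PiC_ext C)"
proof -
  obtain y where y: "y \<ge> 0" "skeleton C = Gn_orbit n ({0} \<times> {-y..0})" using ex by blast
  then have sk: "skeleton C = Ostar n (- y)" using orbit_eq by simp
  have H: "uniqC C (r *\<^sub>R outer_normal a)"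
    if "r > 0" "0 < a" "a \<le> pi / real n" "PhiC C (r *\<^sub>R outer_normal a) > 0" for r a
  proof (rule ccontr)
    assume nu: "\<not> uniqC C (r *\<^sub>R outer_normal a)"
    have dom: "r *\<^sub>R outer_normal a \<in> domain C" using that(4) domain_char by simp
    then have "r *\<^sub>R outer_normal a \<in> Aset" using diff_iff[OF dom] nu by simp
    then have "r *\<^sub>R outer_normal a \<in> closure Aset" by (rule closure_subset[THEN subsetD])
    then have "r *\<^sub>R outer_normal a \<in> skeleton C" by (simp only: skel_eq)
    then show False using sk notO[OF that(1,2,3)] by simp
  qed
  have core: "PiH C t1 \<le> PiH C t2" if "0 < t1" "t1 < t2" "t2 < pi / real n" for t1 t2
    by (rule part2_core[OF H that]) auto
  show ?thesis
  proof (rule mono_onI)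
    fix r s assume rs: "r \<in> {0..pi / real n}" "s \<in> {0..pi / real n}" "r \<le> s"
    show "PiC_ext C r \<le> PiC_ext C s"
    proof (cases "r = 0")
      case True
      show ?thesis
      proof (cases "s = 0")
        case True then show ?thesis using \<open>r = 0\<close> by simp
      next
        case False
        then have "0 < s" using rs by simp
        then have "rhoC C 0 - hC C 0 \<le> PiH C s" using L0_le_PiH[OF core] rs by auto
        moreover have "PiC_ext C s = PiH C s" using PiExt_pos[OF \<open>0 < s\<close>] rs half_lt by simp
        ultimately show ?thesis using True PiExt0 by simp
      qed
    next
      case False
      then have r0: "0 < r" using rs by simp
      then have "PiH C r \<le> PiH C s" using PiH_mono_closed[OF core r0] rs by auto
      moreover have "PiC_ext C s = PiH C s" using PiExt_pos[of s] r0 rs half_lt by simp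
      moreover have "PiC_ext C r = PiH C r" using PiExt_pos[of r] r0 rs half_lt by simp
      ultimately show ?thesis by simp
    qed
  qed
qed

end

theorem proposition5p4:
  fixes n :: nat and C :: "real \<Rightarrow> real \<times> real"
  assumes "n \<ge> 2" and "curve_class C" and "sym_class n C"
  shows "(mono_on {0..pi / real n} (PiC_ext C) \<longrightarrow>
            skeleton C = Gn_orbit n ({0} \<times> {PiC_ext C 0..0}))
       \<and> ((\<exists>y\<ge>0. skeleton C = Gn_orbit n ({0} \<times> {-y..0})) \<longrightarrow>
            mono_on {0..pi / real n} (PiC_ext C))"
proof -
  interpret cv n C using assms by (unfold_locales) auto
  show ?thesis using part1 part2 by blast
qed


end
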